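(* Let $\mathcal N_{A'\to A}$ be a quantum channel and assume the reference is noninteracting with the output, $\widehat H_{RA}=\widehat H_R\otimes\mathbb 1_A+\mathbb 1_R\otimes\widehat H_A$. Then $$F^\beta_{\mathrm T}[\mathcal N]\le E[\mathcal N]-\beta^{-1}S[\mathcal N].$$ Equality holds for every replacer channel $\mathcal R^\omega_{A'\to A}(Y)=\operatorname{tr}[Y]\omega$, $\omega\in\mathrm{St}(A)$, in which case both sides equal $E(\omega)-\beta^{-1}S(\omega)$.
   Context: All Hilbert spaces are finite-dimensional, $|R|=|A'|$, $\beta>0$. $\widehat\gamma^\beta_A=e^{-\beta\widehat H_A}$ and $\widehat{\mathcal T}^\beta_{A'\to A}(Y)=\operatorname{tr}[Y]\widehat\gamma^\beta_A$; $\mathcal R^{\mathbb 1}(Y)=\operatorname{tr}[Y]\mathbb 1_A$. $D$ is the Umegaki relative entropy (second argument a positive semidefinite operator) and $D[\mathcal N\|\mathcal M]=\sup_{\psi\in\mathrm{St}(RA')}D((\mathrm{id}_R\otimes\mathcal N)(\psi)\|(\mathrm{id}_R\otimes\mathcal M)(\psi))$. Thermal free energy: $F^\beta_{\mathrm T}[\mathcal N]=\beta^{-1}D[\mathcal N\|\widehat{\mathcal T}^\beta]$. Channel entropy: $S[\mathcal N]=-D[\mathcal N\|\mathcal R^{\mathbb 1}]=\inf_{\psi}[S(RA)_{(\mathrm{id}\otimes\mathcal N)(\psi)}-S(R)_\psi]$, with $S(\rho)=-\operatorname{tr}\rho\ln\rho$. Energy of a state: $E(\rho_X)=\operatorname{tr}[\widehat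 H_X\rho_X]$; energy of a channel: $E[\mathcal N]=\sup_{\psi\in\mathrm{St}(RA')}[E((\mathrm{id}_R\otimes\mathcal N)(\psi))-E(\psi_R)]$. *)

theory Defs
  imports "Jordan_Normal_Form.Matrix" "HOL-Library.Extended_Real"
begin

definition qadj :: "complex mat \<Rightarrow> complex mat" where
  "qadj A = mat (dim_col A) (dim_row A) (\<lambda>(i,j). cnj (A $$ (j,i)))"

definition qtr :: "complex mat \<Rightarrow> complex" where
  "qtr A = (\<Sum>i<dim_row A. A $$ (i,i))"

definition hermitian :: "nat \<Rightarrow> complex mat \<Rightarrow> bool" where
  "hermitian n A \<longleftrightarrow> A \<in> carrier_mat n n \<and> qadj A = A"

definition psd :: "nat \<Rightarrow> complex mat \<Rightarrow> bool" where
  "psd n A \<longleftrightarrow> hermitian n A \<and>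
     (\<forall>v \<in> carrier_vec n. 0 \<le> Re ((A *\<^sub>v v) \<bullet>c v))"

definition density :: "nat \<Rightarrow> complex mat \<Rightarrow> bool" where
  "density n \<rho> \<longleftrightarrow> psd n \<rho> \<and> qtr \<rho> = 1"

definition unitary :: "nat \<Rightarrow> complex mat \<Rightarrow> bool" where
  "unitary n U \<longleftrightarrow> U \<in> carrier_mat n n \<and> qadj U * U = 1\<^sub>m n"

text \<open>Functional calculus for Hermitian matrices via unitary diagonalisation
  (the result does not depend on the chosen diagonalisation).\<close>
definition mat_fun :: "nat \<Rightarrow> (real \<Rightarrow> real) \<Rightarrow> complex mat \<Rightarrow> complex mat" where
  "mat_fun n f A = (SOME B. \<exists>U d. unitary n U \<and>
      A = U * mat_diag n (\<lambda>i. complex_of_real (d i)) * qadj U \<and>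
      B = U * mat_diag n (\<lambda>i. complex_of_real (f (d i))) * qadj U)"

text \<open>Logarithm on the support (convention 0 ln 0 = 0).\<close>
definition lnp :: "real \<Rightarrow> real" where
  "lnp x = (if 0 < x then ln x else 0)"

definition rel_ent :: "nat \<Rightarrow> complex mat \<Rightarrow> complex mat \<Rightarrow> ereal" where
  "rel_ent n \<rho> \<sigma> =
     (if \<forall>v \<in> carrier_vec n. \<sigma> *\<^sub>v v = 0\<^sub>v n \<longrightarrow> \<rho> *\<^sub>v v = 0\<^sub>v n
      then ereal (Re (qtr (\<rho> * (mat_fun n lnp \<rho> - mat_fun n lnp \<sigma>))))
      else \<infinity>)"

definition vn_ent :: "nat \<Rightarrow> complex mat \<Rightarrow> real" where
  "vn_ent n \<rho> = - Re (qtr (\<rho> * mat_fun n lnp \<rho>))"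

text \<open>Kronecker (tensor) product; index (i,k) of the product corresponds to i*p+k.\<close>
definition kron :: "complex mat \<Rightarrow> complex mat \<Rightarrow> complex mat" where
  "kron A B = mat (dim_row A * dim_row B) (dim_col A * dim_col B)
     (\<lambda>(i,j). A $$ (i div dim_row B, j div dim_col B) * B $$ (i mod dim_row B, j mod dim_col B))"

definition ptr2 :: "nat \<Rightarrow> nat \<Rightarrow> complex mat \<Rightarrow> complex mat" where
  "ptr2 k m X = mat k k (\<lambda>(i,j). \<Sum>a<m. X $$ (i*m + a, j*m + a))"

definition blk :: "nat \<Rightarrow> complex mat \<Rightarrow> nat \<Rightarrow> nat \<Rightarrow> complex mat" where
  "blk m X i j = mat m m (\<lambda>(a,b). X $$ (i*m + a, j*m + b))"

definition id_tensor :: "nat \<Rightarrow> nat \<Rightarrow> nat \<Rightarrow> (complex mat \<Rightarrow> complex mat) \<Rightarrow> complex mat \<Rightarrow> complex mat" where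
  "id_tensor k m n N X = mat (k*n) (k*n)
     (\<lambda>(r,c). (N (blk m X (r div n) (c div n))) $$ (r mod n, c mod n))"

definition channel :: "nat \<Rightarrow> nat \<Rightarrow> (complex mat \<Rightarrow> complex mat) \<Rightarrow> bool" where
  "channel m n N \<longleftrightarrow>
     (\<forall>X \<in> carrier_mat m m. N X \<in> carrier_mat n n) \<and>
     (\<forall>X \<in> carrier_mat m m. \<forall>Y \<in> carrier_mat m m. N (X + Y) = N X + N Y) \<and>
     (\<forall>X \<in> carrier_mat m m. \<forall>c. N (c \<cdot>\<^sub>m X) = c \<cdot>\<^sub>m N X) \<and>
     (\<forall>X \<in> carrier_mat m m. qtr (N X) = qtr X) \<and>
     (\<forall>k X. psd (k*m) X \<longrightarrow> psd (k*n) (id_tensor k m n N X))"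

definition replacer :: "complex mat \<Rightarrow> complex mat \<Rightarrow> complex mat" where
  "replacer \<omega> Y = qtr Y \<cdot>\<^sub>m \<omega>"

text \<open>Unnormalised Gibbs operator exp(-beta H).\<close>
definition gibbs :: "nat \<Rightarrow> real \<Rightarrow> complex mat \<Rightarrow> complex mat" where
  "gibbs n \<beta> H = mat_fun n (\<lambda>x. exp (- \<beta> * x)) H"

text \<open>Channel divergence, reference R of the same dimension m as the input A'.\<close>
definition chan_div :: "nat \<Rightarrow> nat \<Rightarrow> (complex mat \<Rightarrow> complex mat) \<Rightarrow> (complex mat \<Rightarrow> complex mat) \<Rightarrow> ereal" where
  "chan_div m n N M = (SUP \<psi> \<in> {\<psi>. density (m*m) \<psi>}.
      rel_ent (m*n) (id_tensor m m n N \<psi>) (id_tensor m m n M \<psi>))"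

definition free_energy_T :: "nat \<Rightarrow> nat \<Rightarrow> real \<Rightarrow> complex mat \<Rightarrow> (complex mat \<Rightarrow> complex mat) \<Rightarrow> ereal" where
  "free_energy_T m n \<beta> H_A N = ereal (1/\<beta>) * chan_div m n N (replacer (gibbs n \<beta> H_A))"

definition chan_ent :: "nat \<Rightarrow> nat \<Rightarrow> (complex mat \<Rightarrow> complex mat) \<Rightarrow> ereal" where
  "chan_ent m n N = - chan_div m n N (replacer (1\<^sub>m n))"

definition energy :: "complex mat \<Rightarrow> complex mat \<Rightarrow> real" where
  "energy H \<rho> = Re (qtr (H * \<rho>))"

definition chan_energy :: "nat \<Rightarrow> nat \<Rightarrow> complex mat \<Rightarrow> complex mat \<Rightarrow> (complex mat \<Rightarrow> complex mat) \<Rightarrow> ereal" where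
  "chan_energy m n H_RA H_R N = (SUP \<psi> \<in> {\<psi>. density (m*m) \<psi>}.
      ereal (energy H_RA (id_tensor m m n N \<psi>) - energy H_R (ptr2 m m \<psi>)))"

end

theory Submission
  imports Defs "Jordan_Normal_Form.Schur_Decomposition"
begin


abbreviation dg :: "nat \<Rightarrow> (nat \<Rightarrow> real) \<Rightarrow> complex mat" where
  "dg n d \<equiv> mat_diag n (\<lambda>i. complex_of_real (d i))"

lemma mat_diag_dims[simp]: "dim_row (mat_diag n f) = n" "dim_col (mat_diag n f) = n"
  by (simp_all add: mat_diag_def)

lemma qadj_dim[simp]: "dim_row (qadj A) = dim_col A" "dim_col (qadj A) = dim_row A"
  by (auto simp: qadj_def)

lemma qadj_index[simp]: "i < dim_col A \<Longrightarrow> j < dim_row A \<Longrightarrow> qadj A $$ (i,j) = cnj (A $$ (j,i))"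
  by (auto simp: qadj_def)

lemma qadj_carrier[simp]: "A \<in> carrier_mat n m \<Longrightarrow> qadj A \<in> carrier_mat m n"
  unfolding carrier_mat_def by simp

lemma qadj_qadj[simp]: "qadj (qadj A) = A"
  by (rule eq_matI) auto

lemma qadj_mult: assumes "dim_col A = dim_row B" shows "qadj (A * B) = qadj B * qadj A"
proof (rule eq_matI)
  fix i j assume "i < dim_row (qadj B * qadj A)" "j < dim_col (qadj B * qadj A)"
  thus "qadj (A * B) $$ (i, j) = (qadj B * qadj A) $$ (i, j)"
    using assms by (simp add: scalar_prod_def) (rule sum.cong, auto)
qed simp_all

lemma qadj_dg[simp]: "qadj (dg n d) = dg n d"
  by (rule eq_matI) (auto simp: mat_diag_def)

lemma qadj_one[simp]: "qadj (1\<^sub>m n) = 1\<^sub>m n"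
  by (rule eq_matI) auto

lemma qadj_add: "A \<in> carrier_mat n m \<Longrightarrow> B \<in> carrier_mat n m \<Longrightarrow> qadj (A + B) = qadj A + qadj B"
  by (rule eq_matI) auto

lemma qadj_minus: "A \<in> carrier_mat n m \<Longrightarrow> B \<in> carrier_mat n m \<Longrightarrow> qadj (A - B) = qadj A - qadj B"
  by (rule eq_matI) auto

lemma qadj_smult: "qadj (c \<cdot>\<^sub>m A) = cnj c \<cdot>\<^sub>m qadj A"
  by (rule eq_matI) auto

lemma unitary_carrier[simp]: "unitary n U \<Longrightarrow> U \<in> carrier_mat n n"
  by (simp add: unitary_def)

lemma unitary_left: "unitary n U \<Longrightarrow> qadj U * U = 1\<^sub>m n"
  by (simp add: unitary_def)

lemma unitary_right: "unitary n U \<Longrightarrow> U * qadj U = 1\<^sub>m n"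
  unfolding unitary_def
  by (intro mat_mult_left_right_inverse[of "qadj U" n U]) simp_all

lemma unitary_qadj: "unitary n U \<Longrightarrow> unitary n (qadj U)"
  using unitary_right[of n U] unfolding unitary_def by simp

lemma unitary_mult: assumes "unitary n U" "unitary n V" shows "unitary n (U * V)"
proof -
  have U: "U \<in> carrier_mat n n" and V: "V \<in> carrier_mat n n" using assms by simp_all
  have qU: "qadj U \<in> carrier_mat n n" and qV: "qadj V \<in> carrier_mat n n" using U V by simp_all
  have "qadj (U * V) * (U * V) = (qadj V * qadj U) * (U * V)"
    using U V by (simp add: qadj_mult)
  also have "\<dots> = qadj V * ((qadj U * U) * V)"
    using U V qU qV by (simp add: assoc_mult_mat[of _ n n _ n _ n])
  also have "\<dots> = 1\<^sub>m n" using unitary_left[OF assms(1)] unitary_left[OF assms(2)] V by simp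
  finally show ?thesis using U V unfolding unitary_def by simp
qed

lemma unitary_one: "unitary n (1\<^sub>m n)"
  unfolding unitary_def by simp

lemma dg_mult_right: "A \<in> carrier_mat k n \<Longrightarrow> i < k \<Longrightarrow> j < n \<Longrightarrow> (A * dg n d) $$ (i,j) = A $$ (i,j) * d j"
  by (subst mat_diag_mult_right[of A k n]) simp_all

lemma dg_mult_left: "A \<in> carrier_mat n k \<Longrightarrow> i < n \<Longrightarrow> j < k \<Longrightarrow> (dg n d * A) $$ (i,j) = d i * A $$ (i,j)"
  by (subst mat_diag_mult_left[of A n k]) simp_all

lemma diag_fun_transfer:
  fixes U V :: "complex mat"
  assumes U: "unitary n U" and V: "unitary n V"
    and eq: "U * dg n a * qadj U = V * dg n b * qadj V"
  shows "U * dg n (f \<circ> a) * qadj U = V * dg n (f \<circ> b) * qadj V"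
proof -
  have Uc: "U \<in> carrier_mat n n" and Vc: "V \<in> carrier_mat n n" using U V by simp_all
  note sq = assoc_mult_mat[of _ n n _ n _ n] mult_carrier_mat[of _ n n]
    right_mult_one_mat[of _ n n] left_mult_one_mat[of _ n n]
  note UL = unitary_left[OF U] and UR = unitary_right[OF U]
  note VL = unitary_left[OF V] and VR = unitary_right[OF V]
  define X where "X = qadj V * U"
  have Xc: "X \<in> carrier_mat n n" using Uc Vc unfolding X_def carrier_mat_def by simp
  have "X * dg n a = qadj V * (U * dg n a * qadj U) * U"
  proof -
    have "qadj V * (U * dg n a * qadj U) * U = qadj V * U * dg n a * (qadj U * U)"
      using Uc Vc by (simp add: sq)
    thus ?thesis using UL Uc Vc by (simp add: X_def sq)
  qed
  also have "\<dots> = qadj V * (V * dg n b * qadj V) * U" by (simp add: eq)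
  also have "\<dots> = dg n b * X"
  proof -
    have "qadj V * (V * dg n b * qadj V) * U = (qadj V * V) * dg n b * (qadj V * U)"
      using Uc Vc by (simp add: sq)
    thus ?thesis using VL Uc Vc by (simp add: X_def sq)
  qed
  finally have XD: "X * dg n a = dg n b * X" .
  have ent: "X $$ (i,j) * a j = b i * X $$ (i,j)" if "i < n" "j < n" for i j
  proof -
    have "(X * dg n a) $$ (i,j) = (dg n b * X) $$ (i,j)" using XD by simp
    moreover have "(X * dg n a) $$ (i,j) = X $$ (i,j) * a j" by (rule dg_mult_right[OF Xc that])
    moreover have "(dg n b * X) $$ (i,j) = b i * X $$ (i,j)" by (rule dg_mult_left[OF Xc that])
    ultimately show ?thesis by simp
  qed
  have XDf: "X * dg n (f \<circ> a) = dg n (f \<circ> b) * X"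
  proof (rule eq_matI)
    fix i j assume "i < dim_row (dg n (f \<circ> b) * X)" "j < dim_col (dg n (f \<circ> b) * X)"
    hence ij: "i < n" "j < n" using Xc by simp_all
    have "X $$ (i,j) * f (a j) = f (b i) * X $$ (i,j)"
    proof (cases "X $$ (i,j) = 0")
      case False
      with ent[OF ij] have "complex_of_real (a j) = complex_of_real (b i)"
        by (metis mult.commute mult_left_cancel)
      hence "a j = b i" by simp
      thus ?thesis by simp
    qed simp
    thus "(X * dg n (f \<circ> a)) $$ (i, j) = (dg n (f \<circ> b) * X) $$ (i, j)"
      by (simp only: dg_mult_right[OF Xc ij] dg_mult_left[OF Xc ij] comp_def)
  qed (use Xc in simp_all)
  have VX: "V * X = U"
  proof -
    have "V * X = (V * qadj V) * U" unfolding X_def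
      using Uc Vc by (simp add: sq)
    thus ?thesis using VR Uc by (simp add: sq)
  qed
  have XU: "X * qadj U = qadj V"
  proof -
    have "X * qadj U = qadj V * (U * qadj U)" unfolding X_def
      using Uc Vc by (simp add: sq)
    thus ?thesis using UR Vc by (simp add: sq)
  qed
  have "U * dg n (f \<circ> a) * qadj U = V * (X * dg n (f \<circ> a)) * qadj U"
  proof -
    have "V * (X * dg n (f \<circ> a)) * qadj U = (V * X) * dg n (f \<circ> a) * qadj U"
      using Xc Uc Vc by (simp add: sq)
    thus ?thesis by (simp add: VX)
  qed
  also have "\<dots> = V * (dg n (f \<circ> b) * X) * qadj U" by (simp only: XDf)
  also have "\<dots> = V * dg n (f \<circ> b) * (X * qadj U)"
    using Xc Uc Vc by (simp add: sq)
  finally show ?thesis by (simp add: XU)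
qed

lemma mat_fun_eq:
  assumes U: "unitary n U" and A: "A = U * dg n d * qadj U"
  shows "mat_fun n f A = U * dg n (\<lambda>i. f (d i)) * qadj U"
proof -
  let ?P = "\<lambda>B. \<exists>U d. unitary n U \<and> A = U * dg n d * qadj U \<and> B = U * dg n (\<lambda>i. f (d i)) * qadj U"
  have "?P (U * dg n (\<lambda>i. f (d i)) * qadj U)" using U A by blast
  hence "?P (mat_fun n f A)" unfolding mat_fun_def by (rule someI)
  then obtain V e where V: "unitary n V" and AV: "A = V * dg n e * qadj V"
    and B: "mat_fun n f A = V * dg n (\<lambda>i. f (e i)) * qadj V" by blast
  from diag_fun_transfer[OF V U, of e d f] AV A
  show ?thesis using B by (simp add: comp_def)
qed




lemma sum_scalar: "v \<in> carrier_vec n \<Longrightarrow> w \<in> carrier_vec n \<Longrightarrow> v \<bullet> w = (\<Sum>l<n. v $ l * w $ l)"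
  unfolding scalar_prod_def carrier_vec_def by (simp add: lessThan_atLeast0)

lemma mult_index_sum:
  assumes "A \<in> carrier_mat a n" "B \<in> carrier_mat n b" "i < a" "j < b"
  shows "(A * B) $$ (i,j) = (\<Sum>l<n. A $$ (i,l) * B $$ (l,j))"
proof -
  have d: "dim_row A = a" "dim_col A = n" "dim_row B = n" "dim_col B = b" using assms(1,2) by auto
  have "(A * B) $$ (i,j) = row A i \<bullet> col B j" using d assms(3,4) by simp
  also have "\<dots> = (\<Sum>l<n. row A i $ l * col B j $ l)"
    unfolding scalar_prod_def using d by (simp add: lessThan_atLeast0)
  also have "\<dots> = (\<Sum>l<n. A $$ (i,l) * B $$ (l,j))"
    using d assms(3,4) by (intro sum.cong) simp_all
  finally show ?thesis .
qed

lemma udu_index: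
  assumes U: "U \<in> carrier_mat n n" and i: "i < n" and j: "j < n"
  shows "(U * dg n d * qadj U) $$ (i,j) = (\<Sum>l<n. U $$ (i,l) * d l * cnj (U $$ (j,l)))"
proof -
  have d: "dim_row U = n" "dim_col U = n" using U by auto
  have UD: "U * dg n d \<in> carrier_mat n n" using d unfolding carrier_mat_def by simp
  have qU: "qadj U \<in> carrier_mat n n" using d unfolding carrier_mat_def by simp
  have "(U * dg n d * qadj U) $$ (i,j) = (\<Sum>l<n. (U * dg n d) $$ (i,l) * qadj U $$ (l,j))"
    by (rule mult_index_sum[OF UD qU i j])
  also have "\<dots> = (\<Sum>l<n. U $$ (i,l) * d l * cnj (U $$ (j,l)))"
    using d i j by (intro sum.cong refl, subst dg_mult_right[OF U]) simp_all
  finally show ?thesis .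
qed

lemma uu_index:
  assumes U: "U \<in> carrier_mat n n" and i: "i < n" and j: "j < n"
  shows "(qadj U * U) $$ (i,j) = (\<Sum>l<n. cnj (U $$ (l,i)) * U $$ (l,j))"
proof -
  have d: "dim_row U = n" "dim_col U = n" using U by auto
  have qU: "qadj U \<in> carrier_mat n n" using d unfolding carrier_mat_def by simp
  have "(qadj U * U) $$ (i,j) = (\<Sum>l<n. qadj U $$ (i,l) * U $$ (l,j))"
    by (rule mult_index_sum[OF qU U i j])
  also have "\<dots> = (\<Sum>l<n. cnj (U $$ (l,i)) * U $$ (l,j))"
    using d i j by (intro sum.cong) simp_all
  finally show ?thesis .
qed

lemma cprod_self: "v \<bullet>c v = complex_of_real (\<Sum>i<dim_vec v. (cmod (v$i))^2)"
proof -
  have "v \<bullet>c v = (\<Sum>i<dim_vec v. v$i * cnj (v$i))"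
    unfolding scalar_prod_def by (simp add: lessThan_atLeast0)
  also have "\<dots> = (\<Sum>i<dim_vec v. complex_of_real ((cmod (v$i))^2))"
    by (rule sum.cong, simp, rule complex_norm_square[symmetric])
  finally show ?thesis by simp
qed


lemma orthonormal_completion:
  fixes v :: "complex vec"
  assumes v: "v \<in> carrier_vec n" "v \<noteq> 0\<^sub>v n"
  shows "\<exists>W c. unitary n W \<and> col W 0 = c \<cdot>\<^sub>v v \<and> 0 < n"
proof -
  interpret cof_vec_space n "TYPE(complex)" .
  define b where "b = basis_completion v"
  note bc = basis_completion[OF v(1) v(2), folded b_def]
  have b: "set b \<subseteq> carrier_vec n" by (rule bc(2))
  have dist_b: "distinct b" by (rule bc(4))
  have indep: "\<not> lin_dep (set b)" by (rule bc(5))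
  have len_b: "length b = n" by (rule bc(6))
  have hdb: "hd b = v" by (rule bc(7))
  have n0: "0 < n"
  proof (rule ccontr)
    assume "\<not> 0 < n" hence "n = 0" by simp
    moreover have "dim_vec v = n" by (rule carrier_vecD[OF v(1)])
    ultimately have "v = 0\<^sub>v n" by (intro eq_vecI) simp_all
    thus False using v(2) by simp
  qed
  from hdb len_b n0 obtain vs where bv: "b = v # vs" by (cases b) auto
  define ws where "ws = gram_schmidt n b"
  note gs = gram_schmidt_result[OF b dist_b indep ws_def]
  have ws: "corthogonal ws" "set ws \<subseteq> carrier_vec n" "length ws = length b"
    by (rule gs(2), rule gs(3), rule gs(4))
  hence lws: "length ws = n" using len_b by simp
  have "hd ws = v" unfolding ws_def bv using v(1) by simp
  hence ws0: "ws ! 0 = v" using lws n0 by (cases ws) auto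
  have wsc: "ws ! j \<in> carrier_vec n" if "j < n" for j using ws(2) lws that nth_mem by blast
  have wsd: "dim_vec (ws ! j) = n" if "j < n" for j using carrier_vecD[OF wsc[OF that]] .
  define nv where "nv j = (\<Sum>i<n. (cmod (ws ! j $ i))^2)" for j
  have nvc: "ws ! j \<bullet>c ws ! j = complex_of_real (nv j)" if "j < n" for j
    using cprod_self[of "ws ! j"] wsd[OF that] by (simp add: nv_def)
  have nvpos: "0 < nv j" if "j < n" for j
  proof -
    have "ws ! j \<bullet>c ws ! j \<noteq> 0" using ws(1) lws that unfolding corthogonal_def by auto
    hence "nv j \<noteq> 0" using nvc[OF that] by simp
    moreover have "0 \<le> nv j" unfolding nv_def by (simp add: sum_nonneg)
    ultimately show ?thesis by simp
  qed
  define s where "s j = sqrt (nv j)" for j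
  have spos: "0 < s j" if "j < n" for j using nvpos[OF that] by (simp add: s_def)
  have ss: "s j * s j = nv j" if "j < n" for j using nvpos[OF that] by (simp add: s_def)
  define W where "W = mat n n (\<lambda>(i,j). ws ! j $ i / complex_of_real (s j))"
  have Wd: "dim_row W = n" "dim_col W = n" by (simp_all add: W_def)
  have Wc: "W \<in> carrier_mat n n" using Wd by (intro carrier_matI) simp_all
  have WW: "qadj W * W = 1\<^sub>m n"
  proof (rule eq_matI)
    fix i j assume "i < dim_row (1\<^sub>m n :: complex mat)" "j < dim_col (1\<^sub>m n :: complex mat)"
    hence ij: "i < n" "j < n" by simp_all
    have "(qadj W * W) $$ (i,j) = (\<Sum>l<n. cnj (W $$ (l,i)) * W $$ (l,j))"
      by (rule uu_index[OF Wc ij])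
    also have "\<dots> = (\<Sum>l<n. ws ! j $ l * cnj (ws ! i $ l)) / (complex_of_real (s i) * complex_of_real (s j))"
      unfolding sum_divide_distrib using ij by (intro sum.cong refl) (simp add: W_def)
    also have "(\<Sum>l<n. ws ! j $ l * cnj (ws ! i $ l)) = ws ! j \<bullet>c ws ! i"
      unfolding scalar_prod_def using wsd ij by (simp add: lessThan_atLeast0)
    finally have e: "(qadj W * W) $$ (i,j) = (ws ! j \<bullet>c ws ! i) / (complex_of_real (s i) * complex_of_real (s j))" .
    show "(qadj W * W) $$ (i,j) = 1\<^sub>m n $$ (i,j)"
    proof (cases "i = j")
      case True
      have "complex_of_real (s i) * complex_of_real (s i) = complex_of_real (nv i)"
        using ss[OF ij(1)] by (metis of_real_mult)
      moreover have "nv i \<noteq> 0" using nvpos[OF ij(1)] by simp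
      ultimately show ?thesis using e True nvc[OF ij(1)] ij by simp
    next
      case False
      have "ws ! j \<bullet>c ws ! i = 0" using ws(1) lws ij False unfolding corthogonal_def by auto
      thus ?thesis using e False ij by simp
    qed
  qed (simp_all add: Wd)
  have colW: "col W 0 = (1 / complex_of_real (s 0)) \<cdot>\<^sub>v v"
    using n0 ws0 carrier_vecD[OF v(1)] by (intro eq_vecI) (simp_all add: W_def)
  have "unitary n W" unfolding unitary_def using Wc WW by simp
  thus ?thesis using colW n0 by blast
qed


lemma spectral:
  fixes A :: "complex mat"
  shows "A \<in> carrier_mat n n \<Longrightarrow> qadj A = A \<Longrightarrow> \<exists>U d. unitary n U \<and> A = U * dg n d * qadj U"
proof (induction n arbitrary: A)
  case 0
  have "A = 1\<^sub>m 0 * dg 0 (\<lambda>_. 0) * qadj (1\<^sub>m 0)"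
    using carrier_matD[OF "0.prems"(1)] by (intro eq_matI) simp_all
  thus ?case by (intro exI[of _ "1\<^sub>m 0"] exI[of _ "\<lambda>_. 0"] conjI unitary_one)
next
  case (Suc k)
  define n where "n = Suc k"
  have A: "A \<in> carrier_mat n n" and hA: "qadj A = A" using Suc.prems n_def by simp_all
  have Ad: "dim_row A = n" "dim_col A = n" using carrier_matD[OF A] by simp_all
  obtain as where cp: "char_poly A = (\<Prod>a\<leftarrow>as. [:- a, 1:])" and len: "length as = n"
    using char_poly_factorized[OF A] by blast
  obtain e as' where as: "as = e # as'" using len n_def by (cases as) auto
  have "poly (char_poly A) e = 0" unfolding cp as by simp
  hence ev: "eigenvalue A e" using eigenvalue_root_char_poly[OF A] by simp
  define v where "v = find_eigenvector A e"
  have "eigenvector A v e" using find_eigenvector[OF A ev] v_def by simp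
  hence v: "v \<in> carrier_vec n" "v \<noteq> 0\<^sub>v n" "A *\<^sub>v v = e \<cdot>\<^sub>v v"
    unfolding eigenvector_def using Ad by simp_all
  obtain W c where W: "unitary n W" and colW: "col W 0 = c \<cdot>\<^sub>v v"
    using orthonormal_completion[OF v(1) v(2)] by blast
  have Wc: "W \<in> carrier_mat n n" using W by simp
  have Wd: "dim_row W = n" "dim_col W = n" using carrier_matD[OF Wc] by simp_all
  have qWc: "qadj W \<in> carrier_mat n n" using Wc by simp
  note sq = assoc_mult_mat[of _ n n _ n _ n] mult_carrier_mat[of _ n n]
    right_mult_one_mat[of _ n n] left_mult_one_mat[of _ n n]
  define A' where "A' = qadj W * A * W"
  have A'c: "A' \<in> carrier_mat n n" unfolding A'_def using A Wc qWc by (simp add: sq)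
  have A'd: "dim_row A' = n" "dim_col A' = n" using carrier_matD[OF A'c] by simp_all
  have hA': "qadj A' = A'"
    unfolding A'_def using Ad Wd by (simp add: qadj_mult hA sq A Wc qWc)
  have n0: "0 < n" using n_def by simp
  have AWc: "A * W \<in> carrier_mat n n" using A Wc by (simp add: sq)
  have "col A' 0 = qadj W *\<^sub>v (A *\<^sub>v col W 0)"
    unfolding A'_def using A Wc qWc by (simp add: sq col_mult2[OF qWc AWc n0] col_mult2[OF A Wc n0])
  also have "A *\<^sub>v col W 0 = e \<cdot>\<^sub>v col W 0"
    unfolding colW using mult_mat_vec[OF A v(1)] v(3) by (simp add: smult_smult_assoc mult.commute)
  also have "qadj W *\<^sub>v (e \<cdot>\<^sub>v col W 0) = e \<cdot>\<^sub>v (qadj W *\<^sub>v col W 0)"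
    by (rule mult_mat_vec[OF qWc], rule carrier_vecI) (simp add: Wd)
  also have "qadj W *\<^sub>v col W 0 = col (qadj W * W) 0"
    using col_mult2[OF qWc Wc n0] by simp
  also have "\<dots> = unit_vec n 0" using unitary_left[OF W] n0 by simp
  finally have colA': "col A' 0 = e \<cdot>\<^sub>v unit_vec n 0" .
  have A'0: "A' $$ (i,0) = (if i = 0 then e else 0)" if "i < n" for i
  proof -
    have "A' $$ (i,0) = col A' 0 $ i" using that A'd n0 by simp
    thus ?thesis unfolding colA' using that by simp
  qed
  have ereal: "e = complex_of_real (Re e)"
  proof -
    have "qadj A' $$ (0,0) = cnj (A' $$ (0,0))" using A'd n0 by simp
    hence "e = cnj e" using hA' A'0[OF n0] by simp
    thus ?thesis by (metis Reals_cnj_iff complex_is_Real_iff of_real_Re)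
  qed
  have A'0': "A' $$ (0,j) = (if j = 0 then e else 0)" if "j < n" for j
  proof -
    have "A' $$ (0,j) = qadj A' $$ (0,j)" using hA' by simp
    also have "\<dots> = cnj (A' $$ (j,0))" using A'd n0 that by simp
    finally show ?thesis using A'0[OF that] ereal by (metis complex_cnj_complex_of_real complex_cnj_zero)
  qed
  define A3 where "A3 = mat k k (\<lambda>(i,j). A' $$ (Suc i, Suc j))"
  have A3c: "A3 \<in> carrier_mat k k" unfolding A3_def by simp
  have hA3: "qadj A3 = A3"
  proof (rule eq_matI)
    fix i j assume ij: "i < dim_row A3" "j < dim_col A3"
    hence ij': "i < k" "j < k" unfolding A3_def by simp_all
    have "qadj A3 $$ (i,j) = cnj (A' $$ (Suc j, Suc i))" using ij' by (simp add: A3_def)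
    also have "\<dots> = qadj A' $$ (Suc i, Suc j)" using ij' A'd n_def by simp
    also have "\<dots> = A3 $$ (i,j)" using ij' hA' by (simp add: A3_def)
    finally show "qadj A3 $$ (i,j) = A3 $$ (i,j)" .
  qed (simp_all add: A3_def)
  obtain U3 d3 where U3: "unitary k U3" and A3eq: "A3 = U3 * dg k d3 * qadj U3"
    using Suc.IH[OF A3c hA3] by blast
  have U3c: "U3 \<in> carrier_mat k k" using U3 by simp
  define U' where "U' = mat n n (\<lambda>(i,j). if i = 0 then (if j = 0 then 1 else 0)
                          else if j = 0 then 0 else U3 $$ (i - 1, j - 1))"
  define d where "d i = (if i = 0 then Re e else d3 (i - 1))" for i
  have U'c: "U' \<in> carrier_mat n n" unfolding U'_def by simp
  have U'U': "qadj U' * U' = 1\<^sub>m n"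
  proof (rule eq_matI)
    fix i j assume "i < dim_row (1\<^sub>m n :: complex mat)" "j < dim_col (1\<^sub>m n :: complex mat)"
    hence ij: "i < n" "j < n" by simp_all
    have "(qadj U' * U') $$ (i,j) = (\<Sum>l<n. cnj (U' $$ (l,i)) * U' $$ (l,j))"
      by (rule uu_index[OF U'c ij])
    also have "\<dots> = cnj (U' $$ (0,i)) * U' $$ (0,j) + (\<Sum>l<k. cnj (U' $$ (Suc l,i)) * U' $$ (Suc l,j))"
      unfolding n_def by (rule sum.lessThan_Suc_shift)
    also have "\<dots> = 1\<^sub>m n $$ (i,j)"
    proof (cases i)
      case 0
      thus ?thesis using ij by (simp add: U'_def n_def)
    next
      case (Suc i')
      show ?thesis
      proof (cases j)
        case 0
        thus ?thesis using ij Suc by (simp add: U'_def n_def)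
      next
        case (Suc j')
        have "(\<Sum>l<k. cnj (U' $$ (Suc l,i)) * U' $$ (Suc l,j)) = (\<Sum>l<k. cnj (U3 $$ (l,i')) * U3 $$ (l,j'))"
          using ij \<open>i = Suc i'\<close> Suc by (intro sum.cong refl) (simp add: U'_def n_def)
        also have "\<dots> = (qadj U3 * U3) $$ (i',j')"
          using ij \<open>i = Suc i'\<close> Suc n_def by (intro uu_index[symmetric, OF U3c]) simp_all
        also have "\<dots> = 1\<^sub>m k $$ (i',j')" using unitary_left[OF U3] by simp
        finally show ?thesis using ij \<open>i = Suc i'\<close> Suc n_def by (simp add: U'_def)
      qed
    qed
    finally show "(qadj U' * U') $$ (i,j) = 1\<^sub>m n $$ (i,j)" .
  qed (simp_all add: U'_def)
  have U': "unitary n U'" unfolding unitary_def using U'c U'U' by simp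
  have A'eq: "A' = U' * dg n d * qadj U'"
  proof (rule eq_matI)
    fix i j assume "i < dim_row (U' * dg n d * qadj U')" "j < dim_col (U' * dg n d * qadj U')"
    hence ij: "i < n" "j < n" using U'c by (simp_all add: U'_def)
    have "(U' * dg n d * qadj U') $$ (i,j) = (\<Sum>l<n. U' $$ (i,l) * d l * cnj (U' $$ (j,l)))"
      by (rule udu_index[OF U'c ij])
    also have "\<dots> = U' $$ (i,0) * d 0 * cnj (U' $$ (j,0)) + (\<Sum>l<k. U' $$ (i,Suc l) * d (Suc l) * cnj (U' $$ (j,Suc l)))"
      unfolding n_def by (rule sum.lessThan_Suc_shift)
    also have "\<dots> = A' $$ (i,j)"
    proof (cases i)
      case 0
      thus ?thesis using ij A'0' ereal by (simp add: U'_def n_def d_def)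
    next
      case (Suc i')
      show ?thesis
      proof (cases j)
        case 0
        thus ?thesis using ij Suc A'0 by (simp add: U'_def n_def d_def)
      next
        case (Suc j')
        have "(\<Sum>l<k. U' $$ (i,Suc l) * d (Suc l) * cnj (U' $$ (j,Suc l))) = (\<Sum>l<k. U3 $$ (i',l) * d3 l * cnj (U3 $$ (j',l)))"
          using ij \<open>i = Suc i'\<close> Suc by (intro sum.cong refl) (simp add: U'_def n_def d_def)
        also have "\<dots> = (U3 * dg k d3 * qadj U3) $$ (i',j')"
          using ij \<open>i = Suc i'\<close> Suc n_def by (intro udu_index[symmetric, OF U3c]) simp_all
        also have "\<dots> = A' $$ (i,j)" using ij \<open>i = Suc i'\<close> Suc n_def
          by (simp add: A3eq[symmetric] A3_def)
        finally show ?thesis using ij \<open>i = Suc i'\<close> Suc n_def by (simp add: U'_def)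
      qed
    qed
    finally show "A' $$ (i,j) = (U' * dg n d * qadj U') $$ (i,j)" by simp
  qed (simp_all add: A'd U'_def)
  have "A = W * A' * qadj W"
  proof -
    have "W * A' * qadj W = (W * qadj W) * A * (W * qadj W)"
      unfolding A'_def using A Wc qWc by (simp add: sq)
    thus ?thesis using unitary_right[OF W] A by (simp add: sq)
  qed
  also have "\<dots> = (W * U') * dg n d * qadj (W * U')"
    unfolding A'eq using Wc qWc U'c Wd by (simp add: sq qadj_mult U'_def)
  finally have "A = (W * U') * dg n d * qadj (W * U')" .
  moreover have "unitary n (W * U')" by (rule unitary_mult[OF W U'])
  ultimately show ?case unfolding n_def by (intro exI[of _ "W * U'"] exI[of _ d] conjI)
qed




lemma sum_split_prod: fixes p q :: nat shows "(\<Sum>l<p*q. f l) = (\<Sum>x<p. \<Sum>y<q. f (x*q + y)) "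
proof -
  have "(\<Sum>l<p*q. f l) = (\<Sum>x<p. sum f {x*q..<x*q+q})" by (rule sum.nat_group[symmetric])
  also have "\<dots> = (\<Sum>x<p. \<Sum>y<q. f (x*q + y))"
  proof (rule sum.cong[OF refl])
    fix x
    have "sum f {x*q..<x*q+q} = sum f {0 + x*q..<q + x*q}" by (simp add: add.commute)
    also have "\<dots> = (\<Sum>y\<in>{0..<q}. f (y + x*q))" by (rule sum.shift_bounds_nat_ivl)
    also have "\<dots> = (\<Sum>y<q. f (x*q + y))" by (simp add: lessThan_atLeast0 add.commute)
    finally show "sum f {x*q..<x*q+q} = (\<Sum>y<q. f (x*q + y))" .
  qed
  finally show ?thesis .
qed

lemma kron_dims[simp]: "dim_row (kron A B) = dim_row A * dim_row B" "dim_col (kron A B) = dim_col A * dim_col B"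
  by (simp_all add: kron_def)

lemma kron_carrier: "A \<in> carrier_mat a a' \<Longrightarrow> B \<in> carrier_mat b b' \<Longrightarrow> kron A B \<in> carrier_mat (a*b) (a'*b')"
  by (rule carrier_matI) (simp_all add: carrier_matD)

lemma kron_index: "i < dim_row A * dim_row B \<Longrightarrow> j < dim_col A * dim_col B \<Longrightarrow>
   kron A B $$ (i,j) = A $$ (i div dim_row B, j div dim_col B) * B $$ (i mod dim_row B, j mod dim_col B)"
  by (simp add: kron_def)

lemma div_mod_less: "x < p \<Longrightarrow> y < (q::nat) \<Longrightarrow> (x*q + y) div q = x \<and> (x*q + y) mod q = y"
  by simp

lemma lt_mult_div: "i < a * (b::nat) \<Longrightarrow> i div b < a"
  by (simp add: less_mult_imp_div_less)

lemma lt_mult_mod: "i < a * (b::nat) \<Longrightarrow> i mod b < b"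
  by (cases "b = 0") simp_all

lemma xqy_less: "x < p \<Longrightarrow> y < (q::nat) \<Longrightarrow> x*q + y < p*q"
proof -
  assume "x < p" "y < q"
  hence "x*q + y < x*q + q" by simp
  also have "\<dots> = (Suc x) * q" by simp
  also have "\<dots> \<le> p * q" using \<open>x < p\<close> by (intro mult_le_mono1) simp
  finally show ?thesis .
qed

lemma kron_mult:
  assumes A: "A \<in> carrier_mat a p" and B: "B \<in> carrier_mat b q"
    and C: "C \<in> carrier_mat p r" and D: "D \<in> carrier_mat q s"
  shows "kron A B * kron C D = kron (A * C) (B * D)"
proof -
  have Ad: "dim_row A = a" "dim_col A = p" using carrier_matD[OF A] by simp_all
  have Bd: "dim_row B = b" "dim_col B = q" using carrier_matD[OF B] by simp_all
  have Cd: "dim_row C = p" "dim_col C = r" using carrier_matD[OF C] by simp_all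
  have Dd: "dim_row D = q" "dim_col D = s" using carrier_matD[OF D] by simp_all
  show ?thesis
  proof (rule eq_matI)
    fix i j assume "i < dim_row (kron (A * C) (B * D))" "j < dim_col (kron (A * C) (B * D))"
    hence ij: "i < a * b" "j < r * s" using Ad Bd Cd Dd by simp_all
    have KAB: "kron A B \<in> carrier_mat (a*b) (p*q)" by (rule kron_carrier[OF A B])
    have KCD: "kron C D \<in> carrier_mat (p*q) (r*s)" by (rule kron_carrier[OF C D])
    have "(kron A B * kron C D) $$ (i,j) = (\<Sum>l<p*q. kron A B $$ (i,l) * kron C D $$ (l,j))"
      by (rule mult_index_sum[OF KAB KCD ij])
    also have "\<dots> = (\<Sum>x<p. \<Sum>y<q. kron A B $$ (i,x*q+y) * kron C D $$ (x*q+y,j))"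
      by (rule sum_split_prod)
    also have "\<dots> = (\<Sum>x<p. \<Sum>y<q. (A $$ (i div b, x) * C $$ (x, j div s)) * (B $$ (i mod b, y) * D $$ (y, j mod s)))"
    proof (intro sum.cong refl)
      fix x y assume "x \<in> {..<p}" "y \<in> {..<q}"
      hence xy: "x < p" "y < q" by simp_all
      have l: "x*q+y < p*q" by (rule xqy_less[OF xy])
      show "kron A B $$ (i,x*q+y) * kron C D $$ (x*q+y,j) =
         (A $$ (i div b, x) * C $$ (x, j div s)) * (B $$ (i mod b, y) * D $$ (y, j mod s))"
        using ij l xy Ad Bd Cd Dd by (simp add: kron_index)
    qed
    also have "\<dots> = (\<Sum>x<p. A $$ (i div b, x) * C $$ (x, j div s)) * (\<Sum>y<q. B $$ (i mod b, y) * D $$ (y, j mod s))"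
      by (simp add: sum_product)
    also have "\<dots> = (A * C) $$ (i div b, j div s) * (B * D) $$ (i mod b, j mod s)"
      using ij by (simp add: mult_index_sum[OF A C] mult_index_sum[OF B D] lt_mult_div lt_mult_mod)
    also have "\<dots> = kron (A * C) (B * D) $$ (i,j)"
      using ij Ad Bd Cd Dd by (simp add: kron_index)
    finally show "(kron A B * kron C D) $$ (i,j) = kron (A * C) (B * D) $$ (i,j)" .
  qed (simp_all add: Ad Bd Cd Dd)
qed

lemma qadj_kron: "qadj (kron A B) = kron (qadj A) (qadj B)"
  by (rule eq_matI) (simp_all add: kron_index lt_mult_div lt_mult_mod)

lemma kron_one: "kron (1\<^sub>m a) (1\<^sub>m b) = (1\<^sub>m (a*b) :: complex mat)"
proof (rule eq_matI)
  fix i j assume "i < dim_row (1\<^sub>m (a*b) :: complex mat)" "j < dim_col (1\<^sub>m (a*b) :: complex mat)"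
  hence ij: "i < a*b" "j < a*b" by simp_all
  have "(i div b = j div b \<and> i mod b = j mod b) = (i = j)"
    by (metis div_mult_mod_eq)
  thus "kron (1\<^sub>m a) (1\<^sub>m b) $$ (i,j) = (1\<^sub>m (a*b) :: complex mat) $$ (i,j)"
    using ij by (auto simp: kron_index lt_mult_div lt_mult_mod)
qed simp_all

lemma kron_dg: "kron (dg a da) (dg b db) = dg (a*b) (\<lambda>k. da (k div b) * db (k mod b))"
proof (rule eq_matI)
  fix i j assume "i < dim_row (dg (a*b) (\<lambda>k. da (k div b) * db (k mod b)))"
     "j < dim_col (dg (a*b) (\<lambda>k. da (k div b) * db (k mod b)))"
  hence ij: "i < a*b" "j < a*b" by simp_all
  have "(i div b = j div b \<and> i mod b = j mod b) = (i = j)"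
    by (metis div_mult_mod_eq)
  thus "kron (dg a da) (dg b db) $$ (i,j) = dg (a*b) (\<lambda>k. da (k div b) * db (k mod b)) $$ (i,j)"
    using ij by (auto simp: kron_index lt_mult_div lt_mult_mod mat_diag_def)
qed simp_all

lemma unitary_kron: assumes U: "unitary a U" and V: "unitary b V" shows "unitary (a*b) (kron U V)"
proof -
  have Uc: "U \<in> carrier_mat a a" and Vc: "V \<in> carrier_mat b b" using U V by simp_all
  have "qadj (kron U V) * kron U V = kron (qadj U * U) (qadj V * V)"
    unfolding qadj_kron by (rule kron_mult[of "qadj U" a a "qadj V" b b U a V b]) (simp_all add: Uc Vc)
  also have "\<dots> = 1\<^sub>m (a*b)" using unitary_left[OF U] unitary_left[OF V] kron_one by simp
  finally show ?thesis unfolding unitary_def using kron_carrier[OF Uc Vc] by simp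
qed

lemma kron_decomp:
  assumes U: "unitary a U" and V: "unitary b V"
  shows "kron (U * dg a da * qadj U) (V * dg b db * qadj V)
     = kron U V * dg (a*b) (\<lambda>k. da (k div b) * db (k mod b)) * qadj (kron U V)"
proof -
  have Uc: "U \<in> carrier_mat a a" and Vc: "V \<in> carrier_mat b b" using U V by simp_all
  have qUc: "qadj U \<in> carrier_mat a a" and qVc: "qadj V \<in> carrier_mat b b" using Uc Vc by simp_all
  have UD: "U * dg a da \<in> carrier_mat a a" using Uc by (simp add: mult_carrier_mat[of _ a a])
  have VD: "V * dg b db \<in> carrier_mat b b" using Vc by (simp add: mult_carrier_mat[of _ b b])
  have "kron (U * dg a da * qadj U) (V * dg b db * qadj V) = kron (U * dg a da) (V * dg b db) * kron (qadj U) (qadj V)"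
    by (rule kron_mult[symmetric, OF UD VD qUc qVc])
  also have "kron (U * dg a da) (V * dg b db) = kron U V * kron (dg a da) (dg b db)"
    by (rule kron_mult[symmetric, OF Uc Vc mat_diag_dim mat_diag_dim])
  finally show ?thesis by (simp add: kron_dg qadj_kron)
qed

lemma mat_fun_kron:
  assumes U: "unitary a U" and V: "unitary b V"
  shows "mat_fun (a*b) f (kron (U * dg a da * qadj U) (V * dg b db * qadj V))
     = kron U V * dg (a*b) (\<lambda>k. f (da (k div b) * db (k mod b))) * qadj (kron U V)"
  by (rule mat_fun_eq[OF unitary_kron[OF U V] kron_decomp[OF U V]])




lemma qtr_sum: "qtr A = (\<Sum>i<dim_row A. A $$ (i,i))" by (simp add: qtr_def)

lemma qtr_add: "A \<in> carrier_mat n n \<Longrightarrow> B \<in> carrier_mat n n \<Longrightarrow> qtr (A + B) = qtr A + qtr B"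
  using carrier_matD[of A n n] carrier_matD[of B n n]
  by (simp add: qtr_def sum.distrib)

lemma qtr_minus: "A \<in> carrier_mat n n \<Longrightarrow> B \<in> carrier_mat n n \<Longrightarrow> qtr (A - B) = qtr A - qtr B"
  using carrier_matD[of A n n] carrier_matD[of B n n]
  by (simp add: qtr_def sum_subtractf)

lemma qtr_smult: "A \<in> carrier_mat n n \<Longrightarrow> qtr (c \<cdot>\<^sub>m A) = c * qtr A"
  using carrier_matD[of A n n] by (simp add: qtr_def sum_distrib_left)

lemma qtr_zero: "qtr (0\<^sub>m n n :: complex mat) = 0"
  by (simp add: qtr_def)

lemma qtr_comm:
  assumes A: "A \<in> carrier_mat n m" and B: "B \<in> carrier_mat m n"
  shows "qtr (A * B) = qtr (B * A)"
proof -
  have "qtr (A * B) = (\<Sum>i<n. \<Sum>l<m. A $$ (i,l) * B $$ (l,i))"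
    using carrier_matD[OF A] carrier_matD[OF B] mult_index_sum[OF A B]
    by (simp add: qtr_def)
  also have "\<dots> = (\<Sum>l<m. \<Sum>i<n. B $$ (l,i) * A $$ (i,l))"
    by (subst sum.swap) (simp add: mult.commute)
  also have "\<dots> = qtr (B * A)"
    using carrier_matD[OF A] carrier_matD[OF B] mult_index_sum[OF B A]
    by (simp add: qtr_def)
  finally show ?thesis .
qed

lemma qtr_kron:
  assumes A: "A \<in> carrier_mat a a" and B: "B \<in> carrier_mat b b"
  shows "qtr (kron A B) = qtr A * qtr B"
proof -
  have Ad: "dim_row A = a" "dim_col A = a" using carrier_matD[OF A] by simp_all
  have Bd: "dim_row B = b" "dim_col B = b" using carrier_matD[OF B] by simp_all
  have "qtr (kron A B) = (\<Sum>k<a*b. kron A B $$ (k,k))" using Ad Bd by (simp add: qtr_def)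
  also have "\<dots> = (\<Sum>x<a. \<Sum>y<b. kron A B $$ (x*b+y, x*b+y))" by (rule sum_split_prod)
  also have "\<dots> = (\<Sum>x<a. \<Sum>y<b. A $$ (x,x) * B $$ (y,y))"
  proof (intro sum.cong refl)
    fix x y assume "x \<in> {..<a}" "y \<in> {..<b}"
    hence xy: "x < a" "y < b" by simp_all
    have "x*b+y < a*b" by (rule xqy_less[OF xy])
    thus "kron A B $$ (x*b+y, x*b+y) = A $$ (x,x) * B $$ (y,y)" using xy Ad Bd by (simp add: kron_index)
  qed
  also have "\<dots> = qtr A * qtr B" using Ad Bd by (simp add: qtr_def sum_product)
  finally show ?thesis .
qed

lemma trm_add:
  assumes "X \<in> carrier_mat a b" "Y \<in> carrier_mat b a" "Z \<in> carrier_mat b a"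
  shows "qtr (X * (Y + Z)) = qtr (X * Y) + qtr (X * Z)"
  using assms by (simp add: mult_add_distrib_mat[OF assms] qtr_add[of _ a] mult_carrier_mat[of _ a b])

lemma trm_minus:
  assumes "X \<in> carrier_mat a b" "Y \<in> carrier_mat b a" "Z \<in> carrier_mat b a"
  shows "qtr (X * (Y - Z)) = qtr (X * Y) - qtr (X * Z)"
  using assms by (simp add: mult_minus_distrib_mat[OF assms] qtr_minus[of _ a] mult_carrier_mat[of _ a b])

lemma trm_smult:
  assumes "X \<in> carrier_mat a b" "Y \<in> carrier_mat b a"
  shows "qtr (X * (c \<cdot>\<^sub>m Y)) = c * qtr (X * Y)"
  using assms by (simp add: mult_smult_distrib[OF assms] qtr_smult[of _ a] mult_carrier_mat[of _ a b])

lemma trm_kron: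
  assumes A: "A \<in> carrier_mat a a" and B: "B \<in> carrier_mat b b"
    and C: "C \<in> carrier_mat a a" and D: "D \<in> carrier_mat b b"
  shows "qtr (kron A B * kron C D) = qtr (A * C) * qtr (B * D)"
  by (simp add: kron_mult[OF A B C D] qtr_kron[of _ a _ b] mult_carrier_mat[of _ a a] mult_carrier_mat[of _ b b] A B C D)



lemma ptr2_dims[simp]: "dim_row (ptr2 k m X) = k" "dim_col (ptr2 k m X) = k"
  by (simp_all add: ptr2_def)

lemma ptr2_carrier: "ptr2 k m X \<in> carrier_mat k k"
  by (rule carrier_matI) simp_all

lemma ptr2_index: "i < k \<Longrightarrow> j < k \<Longrightarrow> ptr2 k m X $$ (i,j) = (\<Sum>a<m. X $$ (i*m + a, j*m + a))"
  by (simp add: ptr2_def)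

lemma blk_dims[simp]: "dim_row (blk m X i j) = m" "dim_col (blk m X i j) = m"
  by (simp_all add: blk_def)

lemma blk_carrier: "blk m X i j \<in> carrier_mat m m"
  by (rule carrier_matI) simp_all

lemma qtr_blk: "qtr (blk m X i j) = (\<Sum>a<m. X $$ (i*m + a, j*m + a))"
  by (simp add: qtr_def blk_def)

lemma id_tensor_dims[simp]: "dim_row (id_tensor k m n N X) = k*n" "dim_col (id_tensor k m n N X) = k*n"
  by (simp_all add: id_tensor_def)

lemma id_tensor_carrier: "id_tensor k m n N X \<in> carrier_mat (k*n) (k*n)"
  by (rule carrier_matI) simp_all

lemma id_tensor_index: "r < k*n \<Longrightarrow> c < k*n \<Longrightarrow>
  id_tensor k m n N X $$ (r,c) = N (blk m X (r div n) (c div n)) $$ (r mod n, c mod n)"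
  by (simp add: id_tensor_def)

lemma id_tensor_replacer:
  assumes w: "\<omega> \<in> carrier_mat n n"
  shows "id_tensor k m n (replacer \<omega>) X = kron (ptr2 k m X) \<omega>"
proof -
  have wd: "dim_row \<omega> = n" "dim_col \<omega> = n" using carrier_matD[OF w] by simp_all
  show ?thesis
  proof (rule eq_matI)
    fix r c assume "r < dim_row (kron (ptr2 k m X) \<omega>)" "c < dim_col (kron (ptr2 k m X) \<omega>)"
    hence rc: "r < k*n" "c < k*n" using wd by simp_all
    show "id_tensor k m n (replacer \<omega>) X $$ (r,c) = kron (ptr2 k m X) \<omega> $$ (r,c)"
      using rc wd by (simp add: id_tensor_index kron_index replacer_def qtr_blk ptr2_index
          lt_mult_div lt_mult_mod)
  qed (simp_all add: wd)
qed

lemma channel_carrier: "channel m n N \<Longrightarrow> X \<in> carrier_mat m m \<Longrightarrow> N X \<in> carrier_mat n n"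
  unfolding channel_def by blast

lemma channel_tr: "channel m n N \<Longrightarrow> X \<in> carrier_mat m m \<Longrightarrow> qtr (N X) = qtr X"
  unfolding channel_def by blast

lemma channel_cp: "channel m n N \<Longrightarrow> psd (k*m) X \<Longrightarrow> psd (k*n) (id_tensor k m n N X)"
  unfolding channel_def by blast

lemma ptr2_channel:
  assumes N: "channel m n N"
  shows "ptr2 k n (id_tensor k m n N X) = ptr2 k m X"
proof (rule eq_matI)
  fix i j assume "i < dim_row (ptr2 k m X)" "j < dim_col (ptr2 k m X)"
  hence ij: "i < k" "j < k" by simp_all
  have Nc: "N (blk m X i j) \<in> carrier_mat n n" by (rule channel_carrier[OF N blk_carrier])
  have "ptr2 k n (id_tensor k m n N X) $$ (i,j) = (\<Sum>a<n. id_tensor k m n N X $$ (i*n+a, j*n+a))"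
    using ij by (simp add: ptr2_index)
  also have "\<dots> = (\<Sum>a<n. N (blk m X i j) $$ (a,a))"
  proof (intro sum.cong refl)
    fix a assume "a \<in> {..<n}" hence a: "a < n" by simp
    have "i*n+a < k*n" "j*n+a < k*n" using xqy_less[OF ij(1) a] xqy_less[OF ij(2) a] by simp_all
    thus "id_tensor k m n N X $$ (i*n+a, j*n+a) = N (blk m X i j) $$ (a,a)"
      using a by (simp add: id_tensor_index)
  qed
  also have "\<dots> = qtr (N (blk m X i j))" using carrier_matD[OF Nc] by (simp add: qtr_def)
  also have "\<dots> = qtr (blk m X i j)" by (rule channel_tr[OF N blk_carrier])
  also have "\<dots> = ptr2 k m X $$ (i,j)" using ij by (simp add: qtr_blk ptr2_index)
  finally show "ptr2 k n (id_tensor k m n N X) $$ (i,j) = ptr2 k m X $$ (i,j)" .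
qed simp_all

lemma tr_ptr:
  assumes X: "X \<in> carrier_mat (k*n) (k*n)" and H: "H \<in> carrier_mat k k"
  shows "qtr (kron H (1\<^sub>m n) * X) = qtr (H * ptr2 k n X)"
proof -
  have Xd: "dim_row X = k*n" "dim_col X = k*n" using carrier_matD[OF X] by simp_all
  have Hd: "dim_row H = k" "dim_col H = k" using carrier_matD[OF H] by simp_all
  have K: "kron H (1\<^sub>m n) \<in> carrier_mat (k*n) (k*n)" using kron_carrier[OF H one_carrier_mat] .
  have "qtr (kron H (1\<^sub>m n) * X) = (\<Sum>r<k*n. \<Sum>s<k*n. kron H (1\<^sub>m n) $$ (r,s) * X $$ (s,r))"
    using Hd Xd mult_index_sum[OF K X] by (simp add: qtr_def)
  also have "\<dots> = (\<Sum>i<k. \<Sum>a<n. \<Sum>j<k. \<Sum>b<n. kron H (1\<^sub>m n) $$ (i*n+a, j*n+b) * X $$ (j*n+b, i*n+a))"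
    by (simp add: sum_split_prod)
  also have "\<dots> = (\<Sum>i<k. \<Sum>a<n. \<Sum>j<k. \<Sum>b<n. (if a = b then H $$ (i,j) * X $$ (j*n+b, i*n+a) else 0))"
  proof (intro sum.cong refl)
    fix i a j b assume "i \<in> {..<k}" "a \<in> {..<n}" "j \<in> {..<k}" "b \<in> {..<n}"
    hence v: "i < k" "a < n" "j < k" "b < n" by simp_all
    have "i*n+a < k*n" "j*n+b < k*n" using xqy_less[OF v(1,2)] xqy_less[OF v(3,4)] by simp_all
    thus "kron H (1\<^sub>m n) $$ (i*n+a, j*n+b) * X $$ (j*n+b, i*n+a) = (if a = b then H $$ (i,j) * X $$ (j*n+b, i*n+a) else 0)"
      using v Hd by (simp add: kron_index)
  qed
  also have "\<dots> = (\<Sum>i<k. \<Sum>j<k. H $$ (i,j) * (\<Sum>a<n. X $$ (j*n+a, i*n+a)))"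
    by (simp add: sum.swap[of _ "{..<n}" "{..<k}"] sum_distrib_left)
  also have "\<dots> = (\<Sum>i<k. \<Sum>j<k. H $$ (i,j) * ptr2 k n X $$ (j,i))"
    by (intro sum.cong refl) (simp add: ptr2_index)
  also have "\<dots> = qtr (H * ptr2 k n X)"
    using Hd mult_index_sum[OF H ptr2_carrier] by (simp add: qtr_def)
  finally show ?thesis .
qed


section \<open>Diagonal-form algebra\<close>

lemma udu_carrier: "U \<in> carrier_mat n n \<Longrightarrow> U * dg n f * qadj U \<in> carrier_mat n n"
  using carrier_matD[of U n n] by (intro carrier_matI) simp_all

lemma dg_cong: "(\<And>k. k < n \<Longrightarrow> f k = g k) \<Longrightarrow> dg n f = dg n g"
  by (rule eq_matI) (simp_all add: mat_diag_def)

lemma udu_add: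
  assumes U: "U \<in> carrier_mat n n"
  shows "U * dg n f * qadj U + U * dg n g * qadj U = U * dg n (\<lambda>k. f k + g k) * qadj U"
proof (rule eq_matI)
  have Ud: "dim_row U = n" "dim_col U = n" using carrier_matD[OF U] by simp_all
  fix i j assume "i < dim_row (U * dg n (\<lambda>k. f k + g k) * qadj U)" "j < dim_col (U * dg n (\<lambda>k. f k + g k) * qadj U)"
  hence ij: "i < n" "j < n" using Ud by simp_all
  show "(U * dg n f * qadj U + U * dg n g * qadj U) $$ (i,j) = (U * dg n (\<lambda>k. f k + g k) * qadj U) $$ (i,j)"
  proof -
    have "(U * dg n f * qadj U + U * dg n g * qadj U) $$ (i,j) = (U * dg n f * qadj U) $$ (i,j) + (U * dg n g * qadj U) $$ (i,j)"
      using ij Ud by simp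
    also have "\<dots> = (\<Sum>l<n. U $$ (i,l) * f l * cnj (U $$ (j,l)) + U $$ (i,l) * g l * cnj (U $$ (j,l)))"
      unfolding udu_index[OF U ij] by (rule sum.distrib[symmetric])
    also have "\<dots> = (U * dg n (\<lambda>k. f k + g k) * qadj U) $$ (i,j)"
      unfolding udu_index[OF U ij] by (intro sum.cong refl) (simp add: algebra_simps)
    finally show ?thesis .
  qed
qed (simp_all add: carrier_matD[OF U])

lemma udu_smult:
  assumes U: "U \<in> carrier_mat n n"
  shows "complex_of_real c \<cdot>\<^sub>m (U * dg n f * qadj U) = U * dg n (\<lambda>k. c * f k) * qadj U"
proof (rule eq_matI)
  have Ud: "dim_row U = n" "dim_col U = n" using carrier_matD[OF U] by simp_all
  fix i j assume "i < dim_row (U * dg n (\<lambda>k. c * f k) * qadj U)" "j < dim_col (U * dg n (\<lambda>k. c * f k) * qadj U)"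
  hence ij: "i < n" "j < n" using Ud by simp_all
  show "(complex_of_real c \<cdot>\<^sub>m (U * dg n f * qadj U)) $$ (i,j) = (U * dg n (\<lambda>k. c * f k) * qadj U) $$ (i,j)"
  proof -
    have "(complex_of_real c \<cdot>\<^sub>m (U * dg n f * qadj U)) $$ (i,j) = complex_of_real c * (U * dg n f * qadj U) $$ (i,j)"
      using ij Ud by simp
    also have "\<dots> = (U * dg n (\<lambda>k. c * f k) * qadj U) $$ (i,j)"
      unfolding udu_index[OF U ij] sum_distrib_left by (intro sum.cong refl) (simp add: algebra_simps)
    finally show ?thesis .
  qed
qed (simp_all add: carrier_matD[OF U])

lemma udu_zero:
  assumes U: "U \<in> carrier_mat n n"
  shows "U * dg n (\<lambda>k. 0) * qadj U = 0\<^sub>m n n"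
proof (rule eq_matI)
  have Ud: "dim_row U = n" "dim_col U = n" using carrier_matD[OF U] by simp_all
  fix i j assume "i < dim_row (0\<^sub>m n n :: complex mat)" "j < dim_col (0\<^sub>m n n :: complex mat)"
  hence ij: "i < n" "j < n" by simp_all
  show "(U * dg n (\<lambda>k. 0) * qadj U) $$ (i,j) = 0\<^sub>m n n $$ (i,j)"
    unfolding udu_index[OF U ij] using ij by simp
qed (simp_all add: carrier_matD[OF U])

lemma udu_one:
  assumes U: "unitary n U"
  shows "U * dg n (\<lambda>k. 1) * qadj U = 1\<^sub>m n"
proof -
  have Uc: "U \<in> carrier_mat n n" using U by simp
  have "dg n (\<lambda>k. 1) = 1\<^sub>m n" by (rule eq_matI) (simp_all add: mat_diag_def)
  thus ?thesis using unitary_right[OF U] Uc by (simp add: right_mult_one_mat[OF Uc])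
qed

lemma udu_mult:
  assumes U: "unitary n U"
  shows "(U * dg n f * qadj U) * (U * dg n g * qadj U) = U * dg n (\<lambda>k. f k * g k) * qadj U"
proof -
  have Uc: "U \<in> carrier_mat n n" using U by simp
  have qUc: "qadj U \<in> carrier_mat n n" using Uc by simp
  note sq = assoc_mult_mat[of _ n n _ n _ n] mult_carrier_mat[of _ n n]
    right_mult_one_mat[of _ n n] left_mult_one_mat[of _ n n]
  have "(U * dg n f * qadj U) * (U * dg n g * qadj U) = U * dg n f * (qadj U * U) * dg n g * qadj U"
    using Uc qUc by (simp add: sq)
  also have "\<dots> = U * (dg n f * dg n g) * qadj U"
    using Uc qUc unitary_left[OF U] by (simp add: sq)
  also have "dg n f * dg n g = dg n (\<lambda>k. f k * g k)" by simp
  finally show ?thesis .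
qed

definition ind :: "real \<Rightarrow> real" where "ind x = (if 0 < x then 1 else 0)"

lemma lnp_mult: "0 \<le> y \<Longrightarrow> lnp (x * y) = lnp x * ind y + ind x * lnp y"
proof (cases "0 < x")
  case True
  assume y: "0 \<le> y"
  show ?thesis
  proof (cases "0 < y")
    case True
    thus ?thesis using \<open>0 < x\<close> by (simp add: lnp_def ind_def ln_mult)
  next
    case False
    hence "y = 0" using y by simp
    thus ?thesis by (simp add: lnp_def ind_def)
  qed
next
  case False
  assume y: "0 \<le> y"
  have "\<not> 0 < x * y" using False y by (simp add: mult_le_0_iff zero_less_mult_iff)
  thus ?thesis using False by (simp add: lnp_def ind_def)
qed

lemma lnp_kron:
  assumes U: "unitary a U" and V: "unitary b V" and pos: "\<And>j. j < b \<Longrightarrow> 0 \<le> db j"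
  shows "mat_fun (a*b) lnp (kron (U * dg a da * qadj U) (V * dg b db * qadj V))
    = kron (mat_fun a lnp (U * dg a da * qadj U)) (mat_fun b ind (V * dg b db * qadj V))
    + kron (mat_fun a ind (U * dg a da * qadj U)) (mat_fun b lnp (V * dg b db * qadj V))"
proof -
  have Kc: "kron U V \<in> carrier_mat (a*b) (a*b)" using unitary_kron[OF U V] by simp
  have "kron (mat_fun a lnp (U * dg a da * qadj U)) (mat_fun b ind (V * dg b db * qadj V))
      + kron (mat_fun a ind (U * dg a da * qadj U)) (mat_fun b lnp (V * dg b db * qadj V))
    = kron U V * dg (a*b) (\<lambda>k. lnp (da (k div b)) * ind (db (k mod b))) * qadj (kron U V)
      + kron U V * dg (a*b) (\<lambda>k. ind (da (k div b)) * lnp (db (k mod b))) * qadj (kron U V)"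
    by (simp add: mat_fun_eq[OF U refl] mat_fun_eq[OF V refl] kron_decomp[OF U V])
  also have "\<dots> = kron U V * dg (a*b) (\<lambda>k. lnp (da (k div b)) * ind (db (k mod b)) + ind (da (k div b)) * lnp (db (k mod b))) * qadj (kron U V)"
    by (rule udu_add[OF Kc])
  also have "dg (a*b) (\<lambda>k. lnp (da (k div b)) * ind (db (k mod b)) + ind (da (k div b)) * lnp (db (k mod b)))
    = dg (a*b) (\<lambda>k. lnp (da (k div b) * db (k mod b)))"
    by (rule dg_cong) (simp add: lnp_mult[OF pos] lt_mult_mod)
  finally show ?thesis by (simp add: mat_fun_kron[OF U V])
qed


section \<open>Positivity\<close>

lemma quad_form:
  assumes X: "X \<in> carrier_mat N N" and w: "w \<in> carrier_vec N"
  shows "(X *\<^sub>v w) \<bullet>c w = (\<Sum>r<N. \<Sum>s<N. X $$ (r,s) * w $ s * cnj (w $ r))"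
proof -
  have Xd: "dim_row X = N" "dim_col X = N" using carrier_matD[OF X] by simp_all
  have wd: "dim_vec w = N" using carrier_vecD[OF w] .
  have "(X *\<^sub>v w) \<bullet>c w = (\<Sum>r<N. (X *\<^sub>v w) $ r * cnj (w $ r))"
    unfolding scalar_prod_def using wd by (simp add: lessThan_atLeast0)
  also have "\<dots> = (\<Sum>r<N. (\<Sum>s<N. X $$ (r,s) * w $ s) * cnj (w $ r))"
  proof (intro sum.cong refl)
    fix r assume "r \<in> {..<N}" hence r: "r < N" by simp
    have "(X *\<^sub>v w) $ r = row X r \<bullet> w" using r Xd by simp
    also have "\<dots> = (\<Sum>s<N. X $$ (r,s) * w $ s)"
      unfolding scalar_prod_def using wd r Xd by (simp add: lessThan_atLeast0)
    finally show "(X *\<^sub>v w) $ r * cnj (w $ r) = (\<Sum>s<N. X $$ (r,s) * w $ s) * cnj (w $ r)" by simp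
  qed
  also have "\<dots> = (\<Sum>r<N. \<Sum>s<N. X $$ (r,s) * w $ s * cnj (w $ r))"
    by (simp add: sum_distrib_right)
  finally show ?thesis .
qed

lemma psd_carrier: "psd n A \<Longrightarrow> A \<in> carrier_mat n n"
  by (simp add: psd_def hermitian_def)

lemma psd_herm: "psd n A \<Longrightarrow> qadj A = A"
  by (simp add: psd_def hermitian_def)

lemma psd_quad: "psd n A \<Longrightarrow> v \<in> carrier_vec n \<Longrightarrow> 0 \<le> Re ((A *\<^sub>v v) \<bullet>c v)"
  by (simp add: psd_def)

lemma psd_eig_nonneg:
  assumes A: "psd n A" and U: "unitary n U" and eq: "A = U * dg n d * qadj U" and i: "i < n"
  shows "0 \<le> d i"
proof -
  have Ac: "A \<in> carrier_mat n n" by (rule psd_carrier[OF A])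
  have Uc: "U \<in> carrier_mat n n" using U by simp
  have qUc: "qadj U \<in> carrier_mat n n" using Uc by simp
  have Ud: "dim_row U = n" "dim_col U = n" using carrier_matD[OF Uc] by simp_all
  note sq = assoc_mult_mat[of _ n n _ n _ n] mult_carrier_mat[of _ n n]
    right_mult_one_mat[of _ n n] left_mult_one_mat[of _ n n]
  define v where "v = col U i"
  have vc: "v \<in> carrier_vec n" unfolding v_def using Ud by (intro carrier_vecI) simp
  have AU: "A * U = U * dg n d"
  proof -
    have "A * U = U * dg n d * (qadj U * U)" unfolding eq using Uc qUc by (simp add: sq)
    thus ?thesis using unitary_left[OF U] Uc by (simp add: sq)
  qed
  have Av: "(A *\<^sub>v v) $ l = U $$ (l,i) * d i" if "l < n" for l
  proof -
    have "A *\<^sub>v v = col (A * U) i" unfolding v_def using col_mult2[OF Ac Uc i] by simp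
    hence "(A *\<^sub>v v) $ l = (U * dg n d) $$ (l,i)" using that i Ud AU by simp
    thus ?thesis using dg_mult_right[OF Uc that i] by simp
  qed
  have "(A *\<^sub>v v) \<bullet>c v = (\<Sum>l<n. (A *\<^sub>v v) $ l * cnj (v $ l))"
    unfolding scalar_prod_def using carrier_vecD[OF vc] by (simp add: lessThan_atLeast0)
  also have "\<dots> = (\<Sum>l<n. d i * (cnj (U $$ (l,i)) * U $$ (l,i)))"
    using Av Ud i by (intro sum.cong refl) (simp add: v_def)
  also have "\<dots> = d i * (qadj U * U) $$ (i,i)"
    by (simp add: uu_index[OF Uc i i] sum_distrib_left)
  also have "\<dots> = d i" using unitary_left[OF U] i by simp
  finally have "Re ((A *\<^sub>v v) \<bullet>c v) = d i" by simp
  thus ?thesis using psd_quad[OF A vc] by simp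
qed

lemma ptr2_herm:
  assumes X: "X \<in> carrier_mat (k*m) (k*m)" and h: "qadj X = X"
  shows "qadj (ptr2 k m X) = ptr2 k m X"
proof (rule eq_matI)
  have Xd: "dim_row X = k*m" "dim_col X = k*m" using carrier_matD[OF X] by simp_all
  fix i j assume "i < dim_row (ptr2 k m X)" "j < dim_col (ptr2 k m X)"
  hence ij: "i < k" "j < k" by simp_all
  have "qadj (ptr2 k m X) $$ (i,j) = (\<Sum>a<m. cnj (X $$ (j*m+a, i*m+a)))"
    using ij by (simp add: ptr2_index)
  also have "\<dots> = (\<Sum>a<m. X $$ (i*m+a, j*m+a))"
  proof (intro sum.cong refl)
    fix a assume "a \<in> {..<m}" hence a: "a < m" by simp
    have l: "i*m+a < k*m" "j*m+a < k*m" using xqy_less[OF ij(1) a] xqy_less[OF ij(2) a] by simp_all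
    have "X $$ (i*m+a, j*m+a) = qadj X $$ (i*m+a, j*m+a)" using h by simp
    also have "\<dots> = cnj (X $$ (j*m+a, i*m+a))" using l Xd by simp
    finally show "cnj (X $$ (j*m+a, i*m+a)) = X $$ (i*m+a, j*m+a)" by simp
  qed
  also have "\<dots> = ptr2 k m X $$ (i,j)" using ij by (simp add: ptr2_index)
  finally show "qadj (ptr2 k m X) $$ (i,j) = ptr2 k m X $$ (i,j)" .
qed simp_all

lemma sum4_collapse:
  fixes T :: "nat \<Rightarrow> nat \<Rightarrow> complex" and a m k :: nat
  assumes a: "a < m"
  shows "(\<Sum>i<k. \<Sum>b<m. \<Sum>j<k. \<Sum>c<m. (if b = a then (if c = a then T i j else 0) else 0)) = (\<Sum>i<k. \<Sum>j<k. T i j)"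
proof (rule sum.cong[OF refl])
  fix i
  have "(\<Sum>b<m. \<Sum>j<k. \<Sum>c<m. (if b = a then (if c = a then T i j else 0) else 0))
      = (\<Sum>b<m. if b = a then (\<Sum>j<k. \<Sum>c<m. if c = a then T i j else 0) else 0)"
    by (rule sum.cong[OF refl]) (case_tac "x = a", simp_all)
  also have "\<dots> = (\<Sum>j<k. \<Sum>c<m. if c = a then T i j else 0)"
    using a by simp
  also have "\<dots> = (\<Sum>j<k. T i j)"
    using a by (simp add: sum.delta)
  finally show "(\<Sum>b<m. \<Sum>j<k. \<Sum>c<m. (if b = a then (if c = a then T i j else 0) else 0)) = (\<Sum>j<k. T i j)" .
qed

lemma ptr2_psd:
  assumes X: "psd (k*m) X"
  shows "psd k (ptr2 k m X)"
proof -
  have Xc: "X \<in> carrier_mat (k*m) (k*m)" by (rule psd_carrier[OF X])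
  have Xd: "dim_row X = k*m" "dim_col X = k*m" using carrier_matD[OF Xc] by simp_all
  let ?P = "ptr2 k m X"
  have herm: "hermitian k ?P" unfolding hermitian_def
    using ptr2_carrier ptr2_herm[OF Xc psd_herm[OF X]] by simp
  have "0 \<le> Re ((?P *\<^sub>v v) \<bullet>c v)" if v: "v \<in> carrier_vec k" for v
  proof -
    define w where "w a = vec (k*m) (\<lambda>r. if r mod m = a then v $ (r div m) else 0)" for a
    have wc: "w a \<in> carrier_vec (k*m)" for a unfolding w_def by simp
    have widx: "w a $ (i*m + b) = (if b = a then v $ i else 0)" if "i < k" "b < m" for a i b
      using xqy_less[OF that] that unfolding w_def by simp
    have qa: "(X *\<^sub>v w a) \<bullet>c w a = (\<Sum>i<k. \<Sum>j<k. X $$ (i*m+a, j*m+a) * v $ j * cnj (v $ i))"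
      if a: "a < m" for a
    proof -
      have "(X *\<^sub>v w a) \<bullet>c w a = (\<Sum>r<k*m. \<Sum>s<k*m. X $$ (r,s) * w a $ s * cnj (w a $ r))"
        by (rule quad_form[OF Xc wc])
      also have "\<dots> = (\<Sum>i<k. \<Sum>b<m. \<Sum>j<k. \<Sum>c<m. X $$ (i*m+b, j*m+c) * w a $ (j*m+c) * cnj (w a $ (i*m+b)))"
        by (simp add: sum_split_prod)
      also have "\<dots> = (\<Sum>i<k. \<Sum>b<m. \<Sum>j<k. \<Sum>c<m. (if b = a then (if c = a then X $$ (i*m+a, j*m+a) * v $ j * cnj (v $ i) else 0) else 0))"
        by (intro sum.cong refl) (simp add: widx)
      also have "\<dots> = (\<Sum>i<k. \<Sum>j<k. X $$ (i*m+a, j*m+a) * v $ j * cnj (v $ i))"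
        by (rule sum4_collapse[OF a])
      finally show ?thesis .
    qed
    have "(?P *\<^sub>v v) \<bullet>c v = (\<Sum>i<k. \<Sum>j<k. ?P $$ (i,j) * v $ j * cnj (v $ i))"
      by (rule quad_form[OF ptr2_carrier v])
    also have "\<dots> = (\<Sum>i<k. \<Sum>j<k. \<Sum>a<m. X $$ (i*m+a, j*m+a) * v $ j * cnj (v $ i))"
      by (intro sum.cong refl) (simp add: ptr2_index sum_distrib_right)
    also have "\<dots> = (\<Sum>i<k. \<Sum>a<m. \<Sum>j<k. X $$ (i*m+a, j*m+a) * v $ j * cnj (v $ i))"
      by (rule sum.cong[OF refl], rule sum.swap)
    also have "\<dots> = (\<Sum>a<m. \<Sum>i<k. \<Sum>j<k. X $$ (i*m+a, j*m+a) * v $ j * cnj (v $ i))"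
      by (rule sum.swap)
    also have "\<dots> = (\<Sum>a<m. (X *\<^sub>v w a) \<bullet>c w a)"
      by (rule sum.cong[OF refl]) (simp add: qa)
    finally have "Re ((?P *\<^sub>v v) \<bullet>c v) = (\<Sum>a<m. Re ((X *\<^sub>v w a) \<bullet>c w a))" by (simp add: Re_sum)
    also have "\<dots> \<ge> 0" using psd_quad[OF X wc] by (intro sum_nonneg) simp
    finally show ?thesis .
  qed
  thus ?thesis unfolding psd_def using herm by blast
qed

lemma qtr_ptr2:
  assumes X: "X \<in> carrier_mat (k*m) (k*m)"
  shows "qtr (ptr2 k m X) = qtr X"
proof -
  have Xd: "dim_row X = k*m" using carrier_matD[OF X] by simp
  have "qtr X = (\<Sum>i<k. \<Sum>a<m. X $$ (i*m+a, i*m+a))" using Xd by (simp add: qtr_def sum_split_prod)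
  thus ?thesis by (simp add: qtr_def ptr2_index)
qed

lemma density_exists:
  assumes "0 < N"
  shows "\<exists>\<psi>. density N \<psi>"
proof -
  define P :: "complex mat" where "P = mat N N (\<lambda>(i,j). if i = 0 \<and> j = 0 then 1 else 0)"
  have Pc: "P \<in> carrier_mat N N" unfolding P_def by simp
  have herm: "hermitian N P" unfolding hermitian_def
    using Pc by (simp add: P_def) (rule eq_matI, simp_all)
  have "0 \<le> Re ((P *\<^sub>v v) \<bullet>c v)" if v: "v \<in> carrier_vec N" for v
  proof -
    have "(P *\<^sub>v v) \<bullet>c v = (\<Sum>r<N. \<Sum>s<N. P $$ (r,s) * v $ s * cnj (v $ r))"
      by (rule quad_form[OF Pc v])
    also have "\<dots> = (\<Sum>r<N. \<Sum>s<N. (if r = 0 then (if s = 0 then v $ 0 * cnj (v $ 0) else 0) else 0))"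
      by (intro sum.cong refl) (simp add: P_def)
    also have "\<dots> = v $ 0 * cnj (v $ 0)" using assms by (simp add: sum.If_cases)
    finally show ?thesis by (simp add: complex_mult_cnj)
  qed
  moreover have "qtr P = 1" using assms by (simp add: qtr_def P_def sum.If_cases)
  ultimately have "density N P" unfolding density_def psd_def using herm by blast
  thus ?thesis by blast
qed


lemma kron_add_left:
  assumes A: "A \<in> carrier_mat a a'" and B: "B \<in> carrier_mat a a'"
  shows "kron (A + B) C = kron A C + kron B C"
proof -
  have Ad: "dim_row A = a" "dim_col A = a'" using carrier_matD[OF A] by simp_all
  have Bd: "dim_row B = a" "dim_col B = a'" using carrier_matD[OF B] by simp_all
  show ?thesis
    by (rule eq_matI) (simp_all add: Ad Bd kron_index lt_mult_div lt_mult_mod distrib_right)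
qed

lemma kron_smult_right: "kron A (c \<cdot>\<^sub>m B) = c \<cdot>\<^sub>m kron A B"
  by (rule eq_matI) (simp_all add: kron_index lt_mult_div lt_mult_mod mult_ac)

lemma kron_zero_right: "kron A (0\<^sub>m b b' :: complex mat) = 0\<^sub>m (dim_row A * b) (dim_col A * b')"
  by (rule eq_matI) (simp_all add: kron_index lt_mult_div lt_mult_mod)

lemma kron_zero_left: "kron (0\<^sub>m a a' :: complex mat) B = 0\<^sub>m (a * dim_row B) (a' * dim_col B)"
  by (rule eq_matI) (simp_all add: kron_index lt_mult_div lt_mult_mod)

lemma support_zero:
  fixes R S Y :: "complex mat"
  assumes R: "R \<in> carrier_mat N N" and S: "S \<in> carrier_mat N N" and Y: "Y \<in> carrier_mat N c"
    and supp: "\<forall>v \<in> carrier_vec N. S *\<^sub>v v = 0\<^sub>v N \<longrightarrow> R *\<^sub>v v = 0\<^sub>v N"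
    and SY: "S * Y = 0\<^sub>m N c"
  shows "R * Y = 0\<^sub>m N c"
proof (rule eq_matI)
  have Yd: "dim_row Y = N" "dim_col Y = c" using carrier_matD[OF Y] by simp_all
  have Rd: "dim_row R = N" "dim_col R = N" using carrier_matD[OF R] by simp_all
  fix i j assume "i < dim_row (0\<^sub>m N c :: complex mat)" "j < dim_col (0\<^sub>m N c :: complex mat)"
  hence ij: "i < N" "j < c" by simp_all
  have cY: "col Y j \<in> carrier_vec N" using Yd by (intro carrier_vecI) simp
  have "S *\<^sub>v col Y j = col (S * Y) j" using col_mult2[OF S Y ij(2)] by simp
  also have "\<dots> = 0\<^sub>v N" unfolding SY using ij by (intro eq_vecI) simp_all
  finally have "R *\<^sub>v col Y j = 0\<^sub>v N" using supp cY by blast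
  hence "col (R * Y) j = 0\<^sub>v N" using col_mult2[OF R Y ij(2)] by simp
  hence "col (R * Y) j $ i = 0" using ij by simp
  thus "(R * Y) $$ (i,j) = 0\<^sub>m N c $$ (i,j)" using ij Rd Yd by simp
qed (simp_all add: carrier_matD[OF R] carrier_matD[OF Y])

lemma energy_split:
  assumes X: "X \<in> carrier_mat (m*n) (m*n)" and HR: "H_R \<in> carrier_mat m m" and H: "H \<in> carrier_mat n n"
  shows "energy (kron H_R (1\<^sub>m n) + kron (1\<^sub>m m) H) X - energy H_R (ptr2 m n X)
     = Re (qtr (X * kron (1\<^sub>m m) H))"
proof -
  have K1: "kron H_R (1\<^sub>m n) \<in> carrier_mat (m*n) (m*n)" by (rule kron_carrier[OF HR one_carrier_mat])
  have K2: "kron (1\<^sub>m m) H \<in> carrier_mat (m*n) (m*n)" by (rule kron_carrier[OF one_carrier_mat H])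
  have "qtr ((kron H_R (1\<^sub>m n) + kron (1\<^sub>m m) H) * X) = qtr (kron H_R (1\<^sub>m n) * X) + qtr (kron (1\<^sub>m m) H * X)"
    by (simp add: add_mult_distrib_mat[OF K1 K2 X] qtr_add[of _ "m*n"] mult_carrier_mat[of _ "m*n" "m*n"] K1 K2 X)
  also have "qtr (kron H_R (1\<^sub>m n) * X) = qtr (H_R * ptr2 m n X)" by (rule tr_ptr[OF X HR])
  also have "qtr (kron (1\<^sub>m m) H * X) = qtr (X * kron (1\<^sub>m m) H)" by (rule qtr_comm[OF K2 X])
  finally show ?thesis unfolding energy_def by simp
qed

lemma gibbs_decomp:
  assumes V: "unitary n V" and H: "H = V * dg n h * qadj V"
  shows "gibbs n \<beta> H = V * dg n (\<lambda>k. exp (- \<beta> * h k)) * qadj V"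
  unfolding gibbs_def by (rule mat_fun_eq[OF V H])

lemma lnp_gibbs:
  assumes V: "unitary n V" and H: "H = V * dg n h * qadj V"
  shows "mat_fun n lnp (gibbs n \<beta> H) = complex_of_real (- \<beta>) \<cdot>\<^sub>m H"
proof -
  have Vc: "V \<in> carrier_mat n n" using V by simp
  have "mat_fun n lnp (gibbs n \<beta> H) = V * dg n (\<lambda>k. lnp (exp (- \<beta> * h k))) * qadj V"
    by (rule mat_fun_eq[OF V gibbs_decomp[OF V H]])
  also have "\<dots> = V * dg n (\<lambda>k. (- \<beta>) * h k) * qadj V" by (simp add: lnp_def)
  also have "\<dots> = complex_of_real (- \<beta>) \<cdot>\<^sub>m H" unfolding H by (rule udu_smult[OF Vc, symmetric])
  finally show ?thesis .
qed

lemma ind_gibbs: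
  assumes V: "unitary n V" and H: "H = V * dg n h * qadj V"
  shows "mat_fun n ind (gibbs n \<beta> H) = 1\<^sub>m n"
proof -
  have "mat_fun n ind (gibbs n \<beta> H) = V * dg n (\<lambda>k. ind (exp (- \<beta> * h k))) * qadj V"
    by (rule mat_fun_eq[OF V gibbs_decomp[OF V H]])
  also have "\<dots> = V * dg n (\<lambda>k. 1) * qadj V" by (simp add: ind_def)
  also have "\<dots> = 1\<^sub>m n" by (rule udu_one[OF V])
  finally show ?thesis .
qed

lemma gibbs_inv:
  assumes V: "unitary n V" and H: "H = V * dg n h * qadj V"
  shows "(V * dg n (\<lambda>k. exp (\<beta> * h k)) * qadj V) * gibbs n \<beta> H = 1\<^sub>m n"
proof -
  have "(V * dg n (\<lambda>k. exp (\<beta> * h k)) * qadj V) * gibbs n \<beta> H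
     = V * dg n (\<lambda>k. exp (\<beta> * h k) * exp (- \<beta> * h k)) * qadj V"
    unfolding gibbs_decomp[OF V H] by (rule udu_mult[OF V])
  also have "\<dots> = V * dg n (\<lambda>k. 1) * qadj V" by (simp add: exp_minus[symmetric] exp_add[symmetric])
  also have "\<dots> = 1\<^sub>m n" by (rule udu_one[OF V])
  finally show ?thesis .
qed

lemma gibbs_carrier: "gibbs n \<beta> H \<in> carrier_mat n n" if "unitary n V" "H = V * dg n h * qadj V"
  using gibbs_decomp[OF that] udu_carrier[of V n] that(1) by simp


section \<open>The per-state inequality\<close>

lemma herm_decomp:
  assumes "hermitian n A"
  obtains U d where "unitary n U" "A = U * dg n d * qadj U"
  using spectral[of A n] assms unfolding hermitian_def by blast

lemma one_decomp: "1\<^sub>m n = 1\<^sub>m n * dg n (\<lambda>k. 1) * qadj (1\<^sub>m n)"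
  using udu_one[OF unitary_one] by simp

lemma mat_fun_lnp_one: "mat_fun n lnp (1\<^sub>m n) = 0\<^sub>m n n"
proof -
  have "mat_fun n lnp (1\<^sub>m n) = 1\<^sub>m n * dg n (\<lambda>k. lnp 1) * qadj (1\<^sub>m n)"
    by (rule mat_fun_eq[OF unitary_one one_decomp])
  also have "\<dots> = 0\<^sub>m n n" using udu_zero[of "1\<^sub>m n" n] by (simp add: lnp_def)
  finally show ?thesis .
qed

lemma mat_fun_ind_one: "mat_fun n ind (1\<^sub>m n) = 1\<^sub>m n"
proof -
  have "mat_fun n ind (1\<^sub>m n) = 1\<^sub>m n * dg n (\<lambda>k. ind 1) * qadj (1\<^sub>m n)"
    by (rule mat_fun_eq[OF unitary_one one_decomp])
  also have "\<dots> = 1\<^sub>m n" using udu_one[OF unitary_one, of n] by (simp add: ind_def)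
  finally show ?thesis .
qed

lemma per_psi_eq:
  fixes \<psi> H H_R \<rho> :: "complex mat"
  assumes \<rho>c: "\<rho> \<in> carrier_mat (m*n) (m*n)"
    and U: "unitary m U" and R: "R = U * dg m p * qadj U" and p: "\<And>k. k < m \<Longrightarrow> 0 \<le> p k"
    and V: "unitary n V" and H: "H = V * dg n h * qadj V"
    and L: "L \<in> carrier_mat (m*n) (m*n)"
    and CT: "\<forall>v \<in> carrier_vec (m*n). kron R (gibbs n \<beta> H) *\<^sub>v v = 0\<^sub>v (m*n) \<longrightarrow> \<rho> *\<^sub>v v = 0\<^sub>v (m*n)"
  shows "qtr (\<rho> * (L - mat_fun (m*n) lnp (kron R (gibbs n \<beta> H))))
     = qtr (\<rho> * (L - mat_fun (m*n) lnp (kron R (1\<^sub>m n)))) + complex_of_real \<beta> * qtr (\<rho> * kron (1\<^sub>m m) H)"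
proof -
  have Uc: "U \<in> carrier_mat m m" using U by simp
  have Vc: "V \<in> carrier_mat n n" using V by simp
  have Rc: "R \<in> carrier_mat m m" unfolding R by (rule udu_carrier[OF Uc])
  have Hc: "H \<in> carrier_mat n n" unfolding H by (rule udu_carrier[OF Vc])
  define g where "g k = exp (- \<beta> * h k)" for k
  have \<gamma>: "gibbs n \<beta> H = V * dg n g * qadj V" unfolding g_def by (rule gibbs_decomp[OF V H])
  have \<gamma>c: "gibbs n \<beta> H \<in> carrier_mat n n" by (rule gibbs_carrier[OF V H])
  define lR where "lR = mat_fun m lnp R"
  define iR where "iR = mat_fun m ind R"
  define Q where "Q = U * dg m (\<lambda>k. 1 - ind (p k)) * qadj U"
  have lRc: "lR \<in> carrier_mat m m" unfolding lR_def mat_fun_eq[OF U R] by (rule udu_carrier[OF Uc])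
  have iRc: "iR \<in> carrier_mat m m" unfolding iR_def mat_fun_eq[OF U R] by (rule udu_carrier[OF Uc])
  have Qc: "Q \<in> carrier_mat m m" unfolding Q_def by (rule udu_carrier[OF Uc])
  have iRQ: "iR + Q = 1\<^sub>m m"
    unfolding iR_def Q_def mat_fun_eq[OF U R] udu_add[OF Uc]
    using udu_one[OF U] by simp
  have RQ: "R * Q = 0\<^sub>m m m"
  proof -
    have "R * Q = U * dg m (\<lambda>k. p k * (1 - ind (p k))) * qadj U"
      unfolding R Q_def by (rule udu_mult[OF U])
    also have "\<dots> = U * dg m (\<lambda>k. 0) * qadj U"
      by (rule arg_cong[where f = "\<lambda>x. U * x * qadj U"], rule dg_cong)
        (use p in \<open>fastforce simp: ind_def\<close>)
    also have "\<dots> = 0\<^sub>m m m" by (rule udu_zero[OF Uc])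
    finally show ?thesis .
  qed
  have M1: "mat_fun (m*n) lnp (kron R (1\<^sub>m n)) = kron lR (1\<^sub>m n) + kron iR (0\<^sub>m n n)"
  proof -
    have "mat_fun (m*n) lnp (kron R (1\<^sub>m n))
      = kron (mat_fun m lnp R) (mat_fun n ind (1\<^sub>m n)) + kron (mat_fun m ind R) (mat_fun n lnp (1\<^sub>m n))"
      using lnp_kron[OF U unitary_one, where da = p and db = "\<lambda>k. 1"] R one_decomp[of n] by simp
    thus ?thesis by (simp add: lR_def iR_def mat_fun_lnp_one mat_fun_ind_one)
  qed
  have MT: "mat_fun (m*n) lnp (kron R (gibbs n \<beta> H)) = kron lR (1\<^sub>m n) + kron iR (complex_of_real (- \<beta>) \<cdot>\<^sub>m H)"
  proof -
    have gpos: "0 \<le> g k" for k by (simp add: g_def)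
    have "mat_fun (m*n) lnp (kron R (gibbs n \<beta> H))
      = kron (mat_fun m lnp R) (mat_fun n ind (gibbs n \<beta> H)) + kron (mat_fun m ind R) (mat_fun n lnp (gibbs n \<beta> H))"
      using lnp_kron[OF U V, where da = p and db = g] R \<gamma> gpos by simp
    thus ?thesis by (simp add: lR_def iR_def lnp_gibbs[OF V H] ind_gibbs[OF V H])
  qed
  have K_l1: "kron lR (1\<^sub>m n) \<in> carrier_mat (m*n) (m*n)" by (rule kron_carrier[OF lRc one_carrier_mat])
  have K_i0: "kron iR (0\<^sub>m n n) \<in> carrier_mat (m*n) (m*n)" by (rule kron_carrier[OF iRc zero_carrier_mat])
  have K_iH: "kron iR H \<in> carrier_mat (m*n) (m*n)" by (rule kron_carrier[OF iRc Hc])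
  have K_iHb: "kron iR (complex_of_real (- \<beta>) \<cdot>\<^sub>m H) \<in> carrier_mat (m*n) (m*n)"
    by (rule kron_carrier[OF iRc smult_carrier_mat[OF Hc]])
  have K_QH: "kron Q H \<in> carrier_mat (m*n) (m*n)" by (rule kron_carrier[OF Qc Hc])
  have K_Q1: "kron Q (1\<^sub>m n) \<in> carrier_mat (m*n) (m*n)" by (rule kron_carrier[OF Qc one_carrier_mat])
  have K_1H: "kron (1\<^sub>m m) H \<in> carrier_mat (m*n) (m*n)" by (rule kron_carrier[OF one_carrier_mat Hc])
  have K_RG: "kron R (gibbs n \<beta> H) \<in> carrier_mat (m*n) (m*n)" by (rule kron_carrier[OF Rc \<gamma>c])
  have M1c: "kron lR (1\<^sub>m n) + kron iR (0\<^sub>m n n) \<in> carrier_mat (m*n) (m*n)"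
    by (rule add_carrier_mat[OF K_i0])
  have MTc: "kron lR (1\<^sub>m n) + kron iR (complex_of_real (- \<beta>) \<cdot>\<^sub>m H) \<in> carrier_mat (m*n) (m*n)"
    by (rule add_carrier_mat[OF K_iHb])
  have tr1: "qtr (\<rho> * (kron lR (1\<^sub>m n) + kron iR (0\<^sub>m n n))) = qtr (\<rho> * kron lR (1\<^sub>m n))"
  proof -
    have "qtr (\<rho> * (kron lR (1\<^sub>m n) + kron iR (0\<^sub>m n n))) = qtr (\<rho> * kron lR (1\<^sub>m n)) + qtr (\<rho> * kron iR (0\<^sub>m n n))"
      by (rule trm_add[OF \<rho>c K_l1 K_i0])
    moreover have "\<rho> * kron iR (0\<^sub>m n n) = 0\<^sub>m (m*n) (m*n)"
      unfolding kron_zero_right using carrier_matD[OF iRc] by (simp add: right_mult_zero_mat[OF \<rho>c])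
    ultimately show ?thesis by (simp add: qtr_zero)
  qed
  have trT: "qtr (\<rho> * (kron lR (1\<^sub>m n) + kron iR (complex_of_real (- \<beta>) \<cdot>\<^sub>m H)))
      = qtr (\<rho> * kron lR (1\<^sub>m n)) - complex_of_real \<beta> * qtr (\<rho> * kron iR H)"
  proof -
    have "qtr (\<rho> * (kron lR (1\<^sub>m n) + kron iR (complex_of_real (- \<beta>) \<cdot>\<^sub>m H)))
      = qtr (\<rho> * kron lR (1\<^sub>m n)) + qtr (\<rho> * kron iR (complex_of_real (- \<beta>) \<cdot>\<^sub>m H))"
      by (rule trm_add[OF \<rho>c K_l1 K_iHb])
    also have "qtr (\<rho> * kron iR (complex_of_real (- \<beta>) \<cdot>\<^sub>m H)) = complex_of_real (- \<beta>) * qtr (\<rho> * kron iR H)"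
      unfolding kron_smult_right by (rule trm_smult[OF \<rho>c K_iH])
    finally show ?thesis by simp
  qed
  have \<rho>Q: "\<rho> * kron Q (1\<^sub>m n) = 0\<^sub>m (m*n) (m*n)"
  proof (rule support_zero[OF \<rho>c K_RG K_Q1 CT])
    have "kron R (gibbs n \<beta> H) * kron Q (1\<^sub>m n) = kron (R * Q) (gibbs n \<beta> H * 1\<^sub>m n)"
      by (rule kron_mult[OF Rc \<gamma>c Qc one_carrier_mat])
    also have "\<dots> = 0\<^sub>m (m*n) (m*n)" unfolding RQ kron_zero_left using carrier_matD[OF \<gamma>c] by simp
    finally show "kron R (gibbs n \<beta> H) * kron Q (1\<^sub>m n) = 0\<^sub>m (m*n) (m*n)" .
  qed
  have trQ: "qtr (\<rho> * kron Q H) = 0"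
  proof -
    have "kron Q H = kron Q (1\<^sub>m n) * kron (1\<^sub>m m) H"
      using kron_mult[OF Qc one_carrier_mat one_carrier_mat Hc] Qc Hc by simp
    hence "\<rho> * kron Q H = (\<rho> * kron Q (1\<^sub>m n)) * kron (1\<^sub>m m) H"
      using assoc_mult_mat[OF \<rho>c K_Q1 K_1H] by simp
    also have "\<dots> = 0\<^sub>m (m*n) (m*n)" unfolding \<rho>Q by (rule left_mult_zero_mat[OF K_1H])
    finally show ?thesis by (simp add: qtr_zero)
  qed
  have tr1H: "qtr (\<rho> * kron (1\<^sub>m m) H) = qtr (\<rho> * kron iR H)"
  proof -
    have "kron (1\<^sub>m m) H = kron iR H + kron Q H" unfolding iRQ[symmetric] by (rule kron_add_left[OF iRc Qc])
    hence "qtr (\<rho> * kron (1\<^sub>m m) H) = qtr (\<rho> * kron iR H) + qtr (\<rho> * kron Q H)"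
      using trm_add[OF \<rho>c K_iH K_QH] by simp
    thus ?thesis using trQ by simp
  qed
  have "qtr (\<rho> * (L - mat_fun (m*n) lnp (kron R (gibbs n \<beta> H))))
      = qtr (\<rho> * L) - (qtr (\<rho> * kron lR (1\<^sub>m n)) - complex_of_real \<beta> * qtr (\<rho> * kron iR H))"
    unfolding MT trm_minus[OF \<rho>c L MTc] trT ..
  also have "\<dots> = (qtr (\<rho> * L) - qtr (\<rho> * kron lR (1\<^sub>m n))) + complex_of_real \<beta> * qtr (\<rho> * kron (1\<^sub>m m) H)"
    unfolding tr1H by simp
  also have "qtr (\<rho> * L) - qtr (\<rho> * kron lR (1\<^sub>m n)) = qtr (\<rho> * (L - mat_fun (m*n) lnp (kron R (1\<^sub>m n))))"
    unfolding M1 trm_minus[OF \<rho>c L M1c] tr1 ..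
  finally show ?thesis .
qed


lemma M1_formula:
  assumes U: "unitary m U" and R: "R = U * dg m p * qadj U"
  shows "mat_fun (m*n) lnp (kron R (1\<^sub>m n)) = kron (mat_fun m lnp R) (1\<^sub>m n) + kron (mat_fun m ind R) (0\<^sub>m n n)"
proof -
  have "mat_fun (m*n) lnp (kron R (1\<^sub>m n))
    = kron (mat_fun m lnp R) (mat_fun n ind (1\<^sub>m n)) + kron (mat_fun m ind R) (mat_fun n lnp (1\<^sub>m n))"
    using lnp_kron[OF U unitary_one, where da = p and db = "\<lambda>k. 1"] R one_decomp[of n] by simp
  thus ?thesis by (simp add: mat_fun_lnp_one mat_fun_ind_one)
qed

lemma MT_formula:
  assumes U: "unitary m U" and R: "R = U * dg m p * qadj U"
    and V: "unitary n V" and H: "H = V * dg n h * qadj V"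
  shows "mat_fun (m*n) lnp (kron R (gibbs n \<beta> H)) = kron (mat_fun m lnp R) (1\<^sub>m n) + kron (mat_fun m ind R) (complex_of_real (- \<beta>) \<cdot>\<^sub>m H)"
proof -
  define g where "g k = exp (- \<beta> * h k)" for k
  have \<gamma>: "gibbs n \<beta> H = V * dg n g * qadj V" unfolding g_def by (rule gibbs_decomp[OF V H])
  have gpos: "0 \<le> g k" for k by (simp add: g_def)
  have "mat_fun (m*n) lnp (kron R (gibbs n \<beta> H))
    = kron (mat_fun m lnp R) (mat_fun n ind (gibbs n \<beta> H)) + kron (mat_fun m ind R) (mat_fun n lnp (gibbs n \<beta> H))"
    using lnp_kron[OF U V, where da = p and db = g] R \<gamma> gpos by simp
  thus ?thesis by (simp add: lnp_gibbs[OF V H] ind_gibbs[OF V H])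
qed

lemma mult_zero_vec:
  assumes A: "(A :: complex mat) \<in> carrier_mat r c"
  shows "A *\<^sub>v 0\<^sub>v c = 0\<^sub>v r"
proof (rule eq_vecI)
  have Ad: "dim_row A = r" "dim_col A = c" using carrier_matD[OF A] by simp_all
  fix i assume "i < dim_vec (0\<^sub>v r :: complex vec)"
  hence i: "i < r" by simp
  have "row A i \<in> carrier_vec c" using Ad by (intro carrier_vecI) simp
  thus "(A *\<^sub>v 0\<^sub>v c) $ i = 0\<^sub>v r $ i" using i Ad by simp
qed (simp add: carrier_matD[OF A])

lemma gibbs_supp:
  assumes V: "unitary n V" and H: "H = V * dg n h * qadj V" and Rc: "R \<in> carrier_mat m m"
    and v: "v \<in> carrier_vec (m*n)" and z: "kron R (gibbs n \<beta> H) *\<^sub>v v = 0\<^sub>v (m*n)"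
  shows "kron R (1\<^sub>m n) *\<^sub>v v = 0\<^sub>v (m*n)"
proof -
  have Vc: "V \<in> carrier_mat n n" using V by simp
  define G' where "G' = V * dg n (\<lambda>k. exp (\<beta> * h k)) * qadj V"
  have G'c: "G' \<in> carrier_mat n n" unfolding G'_def by (rule udu_carrier[OF Vc])
  have \<gamma>c: "gibbs n \<beta> H \<in> carrier_mat n n" by (rule gibbs_carrier[OF V H])
  have "kron (1\<^sub>m m) G' * kron R (gibbs n \<beta> H) = kron (1\<^sub>m m * R) (G' * gibbs n \<beta> H)"
    by (rule kron_mult[OF one_carrier_mat G'c Rc \<gamma>c])
  also have "\<dots> = kron R (1\<^sub>m n)" using gibbs_inv[OF V H] Rc unfolding G'_def by simp
  finally have eq: "kron R (1\<^sub>m n) = kron (1\<^sub>m m) G' * kron R (gibbs n \<beta> H)" by simp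
  have "kron R (1\<^sub>m n) *\<^sub>v v = kron (1\<^sub>m m) G' *\<^sub>v (kron R (gibbs n \<beta> H) *\<^sub>v v)"
    unfolding eq by (rule assoc_mult_mat_vec[OF kron_carrier[OF one_carrier_mat G'c] kron_carrier[OF Rc \<gamma>c] v])
  also have "\<dots> = 0\<^sub>v (m*n)" unfolding z
    by (rule mult_zero_vec[OF kron_carrier[OF one_carrier_mat G'c]])
  finally show ?thesis .
qed

lemma per_psi:
  fixes \<psi> H H_R :: "complex mat"
  assumes m: "0 < m" and n: "0 < n" and \<beta>: "0 < \<beta>"
    and HA: "hermitian n H" and HR: "hermitian m H_R"
    and N: "channel m n N" and \<psi>: "density (m*m) \<psi>"
  shows "rel_ent (m*n) (id_tensor m m n N \<psi>) (id_tensor m m n (replacer (gibbs n \<beta> H)) \<psi>)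
     \<le> rel_ent (m*n) (id_tensor m m n N \<psi>) (id_tensor m m n (replacer (1\<^sub>m n)) \<psi>)
       + ereal \<beta> * ereal (energy (kron H_R (1\<^sub>m n) + kron (1\<^sub>m m) H) (id_tensor m m n N \<psi>) - energy H_R (ptr2 m m \<psi>))"
proof -
  define \<rho> where "\<rho> = id_tensor m m n N \<psi>"
  define R where "R = ptr2 m m \<psi>"
  have \<psi>p: "psd (m*m) \<psi>" using \<psi> by (simp add: density_def)
  have \<rho>p: "psd (m*n) \<rho>" unfolding \<rho>_def by (rule channel_cp[OF N \<psi>p])
  have \<rho>c: "\<rho> \<in> carrier_mat (m*n) (m*n)" by (rule psd_carrier[OF \<rho>p])
  have Rp: "psd m R" unfolding R_def by (rule ptr2_psd[OF \<psi>p])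
  obtain U p where U: "unitary m U" and Rd: "R = U * dg m p * qadj U"
    using herm_decomp[of m R] Rp unfolding psd_def by blast
  have p: "0 \<le> p k" if "k < m" for k by (rule psd_eig_nonneg[OF Rp U Rd that])
  obtain V h where V: "unitary n V" and Hd: "H = V * dg n h * qadj V"
    using herm_decomp[OF HA] by blast
  obtain W r where W: "unitary (m*n) W" and \<rho>d: "\<rho> = W * dg (m*n) r * qadj W"
    using herm_decomp[of "m*n" \<rho>] \<rho>p unfolding psd_def by blast
  have Wc: "W \<in> carrier_mat (m*n) (m*n)" using W by simp
  define L where "L = mat_fun (m*n) lnp \<rho>"
  have Lc: "L \<in> carrier_mat (m*n) (m*n)" unfolding L_def mat_fun_eq[OF W \<rho>d] by (rule udu_carrier[OF Wc])
  have Rc: "R \<in> carrier_mat m m" by (rule psd_carrier[OF Rp])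
  have HRc: "H_R \<in> carrier_mat m m" using HR by (simp add: hermitian_def)
  have Hc: "H \<in> carrier_mat n n" using HA by (simp add: hermitian_def)
  have \<gamma>c: "gibbs n \<beta> H \<in> carrier_mat n n" by (rule gibbs_carrier[OF V Hd])
  have s1: "id_tensor m m n (replacer (1\<^sub>m n)) \<psi> = kron R (1\<^sub>m n)"
    unfolding R_def by (rule id_tensor_replacer[OF one_carrier_mat])
  have sT: "id_tensor m m n (replacer (gibbs n \<beta> H)) \<psi> = kron R (gibbs n \<beta> H)"
    unfolding R_def by (rule id_tensor_replacer[OF \<gamma>c])
  have en: "energy (kron H_R (1\<^sub>m n) + kron (1\<^sub>m m) H) \<rho> - energy H_R R = Re (qtr (\<rho> * kron (1\<^sub>m m) H))"
    using energy_split[OF \<rho>c HRc Hc] ptr2_channel[OF N, of m \<psi>] unfolding \<rho>_def R_def by simp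
  show ?thesis
  proof (cases "\<forall>v \<in> carrier_vec (m*n). kron R (1\<^sub>m n) *\<^sub>v v = 0\<^sub>v (m*n) \<longrightarrow> \<rho> *\<^sub>v v = 0\<^sub>v (m*n)")
    case False
    hence "rel_ent (m*n) \<rho> (kron R (1\<^sub>m n)) = \<infinity>" unfolding rel_ent_def by simp
    thus ?thesis unfolding s1 \<rho>_def[symmetric] R_def[symmetric] by simp
  next
    case True
    have CT: "\<forall>v \<in> carrier_vec (m*n). kron R (gibbs n \<beta> H) *\<^sub>v v = 0\<^sub>v (m*n) \<longrightarrow> \<rho> *\<^sub>v v = 0\<^sub>v (m*n)"
      using True gibbs_supp[OF V Hd Rc] by blast
    have eq: "qtr (\<rho> * (L - mat_fun (m*n) lnp (kron R (gibbs n \<beta> H))))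
      = qtr (\<rho> * (L - mat_fun (m*n) lnp (kron R (1\<^sub>m n)))) + complex_of_real \<beta> * qtr (\<rho> * kron (1\<^sub>m m) H)"
      by (rule per_psi_eq[OF \<rho>c U Rd p V Hd Lc CT])
    have "rel_ent (m*n) \<rho> (kron R (gibbs n \<beta> H))
       = ereal (Re (qtr (\<rho> * (L - mat_fun (m*n) lnp (kron R (1\<^sub>m n))))) + \<beta> * Re (qtr (\<rho> * kron (1\<^sub>m m) H)))"
      unfolding rel_ent_def L_def[symmetric] using CT eq by simp
    also have "\<dots> = rel_ent (m*n) \<rho> (kron R (1\<^sub>m n)) + ereal \<beta> * ereal (Re (qtr (\<rho> * kron (1\<^sub>m m) H)))"
      unfolding rel_ent_def L_def[symmetric] using True by simp
    finally show ?thesis unfolding s1 sT \<rho>_def[symmetric] R_def[symmetric] en by simp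
  qed
qed


lemma ptr2_kron:
  assumes A: "A \<in> carrier_mat k k" and B: "B \<in> carrier_mat n n"
  shows "ptr2 k n (kron A B) = qtr B \<cdot>\<^sub>m A"
proof (rule eq_matI)
  have Ad: "dim_row A = k" "dim_col A = k" using carrier_matD[OF A] by simp_all
  have Bd: "dim_row B = n" "dim_col B = n" using carrier_matD[OF B] by simp_all
  fix i j assume "i < dim_row (qtr B \<cdot>\<^sub>m A)" "j < dim_col (qtr B \<cdot>\<^sub>m A)"
  hence ij: "i < k" "j < k" using Ad by simp_all
  have "ptr2 k n (kron A B) $$ (i,j) = (\<Sum>a<n. kron A B $$ (i*n+a, j*n+a))" using ij by (simp add: ptr2_index)
  also have "\<dots> = (\<Sum>a<n. A $$ (i,j) * B $$ (a,a))"
  proof (intro sum.cong refl)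
    fix a assume "a \<in> {..<n}" hence a: "a < n" by simp
    have "i*n+a < k*n" "j*n+a < k*n" using xqy_less[OF ij(1) a] xqy_less[OF ij(2) a] by simp_all
    thus "kron A B $$ (i*n+a, j*n+a) = A $$ (i,j) * B $$ (a,a)" using a Ad Bd by (simp add: kron_index)
  qed
  also have "\<dots> = (qtr B \<cdot>\<^sub>m A) $$ (i,j)" using ij Ad Bd by (simp add: qtr_def sum_distrib_left mult.commute)
  finally show "ptr2 k n (kron A B) $$ (i,j) = (qtr B \<cdot>\<^sub>m A) $$ (i,j)" .
qed (simp_all add: carrier_matD[OF A])

lemma psd_ind_mult:
  assumes Ap: "psd n A" and U: "unitary n U" and Ad: "A = U * dg n d * qadj U"
  shows "A * mat_fun n ind A = A"
proof -
  have "A * mat_fun n ind A = U * dg n (\<lambda>k. d k * ind (d k)) * qadj U"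
    unfolding mat_fun_eq[OF U Ad] by (subst Ad, rule udu_mult[OF U])
  also have "\<dots> = U * dg n d * qadj U"
  proof (rule arg_cong[where f = "\<lambda>x. U * x * qadj U"], rule dg_cong)
    fix k assume "k < n"
    hence "0 \<le> d k" by (rule psd_eig_nonneg[OF Ap U Ad])
    thus "d k * ind (d k) = d k" by (auto simp: ind_def)
  qed
  finally show ?thesis using Ad by simp
qed

lemma per_psi_omega:
  fixes \<psi> H H_R \<omega> :: "complex mat"
  assumes m: "0 < m" and n: "0 < n" and \<beta>: "0 < \<beta>"
    and HA: "hermitian n H" and HR: "hermitian m H_R"
    and \<omega>: "density n \<omega>" and \<psi>: "density (m*m) \<psi>"
  shows "rel_ent (m*n) (id_tensor m m n (replacer \<omega>) \<psi>) (id_tensor m m n (replacer (gibbs n \<beta> H)) \<psi>)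
           = ereal (- vn_ent n \<omega> + \<beta> * energy H \<omega>)"
    and "rel_ent (m*n) (id_tensor m m n (replacer \<omega>) \<psi>) (id_tensor m m n (replacer (1\<^sub>m n)) \<psi>)
           = ereal (- vn_ent n \<omega>)"
    and "energy (kron H_R (1\<^sub>m n) + kron (1\<^sub>m m) H) (id_tensor m m n (replacer \<omega>) \<psi>) - energy H_R (ptr2 m m \<psi>)
           = energy H \<omega>"
proof -
  define R where "R = ptr2 m m \<psi>"
  have \<psi>p: "psd (m*m) \<psi>" using \<psi> by (simp add: density_def)
  have \<psi>c: "\<psi> \<in> carrier_mat (m*m) (m*m)" by (rule psd_carrier[OF \<psi>p])
  have \<omega>p: "psd n \<omega>" using \<omega> by (simp add: density_def)
  have \<omega>c: "\<omega> \<in> carrier_mat n n" by (rule psd_carrier[OF \<omega>p])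
  have tr\<omega>: "qtr \<omega> = 1" using \<omega> by (simp add: density_def)
  have Rp: "psd m R" unfolding R_def by (rule ptr2_psd[OF \<psi>p])
  have Rc: "R \<in> carrier_mat m m" by (rule psd_carrier[OF Rp])
  have trR: "qtr R = 1" unfolding R_def qtr_ptr2[OF \<psi>c] using \<psi> by (simp add: density_def)
  obtain U p where U: "unitary m U" and Rd: "R = U * dg m p * qadj U"
    using herm_decomp[of m R] Rp unfolding psd_def by blast
  obtain V h where V: "unitary n V" and Hd: "H = V * dg n h * qadj V"
    using herm_decomp[OF HA] by blast
  obtain Y w where Y: "unitary n Y" and \<omega>d: "\<omega> = Y * dg n w * qadj Y"
    using herm_decomp[of n \<omega>] \<omega>p unfolding psd_def by blast
  have w: "0 \<le> w k" if "k < n" for k by (rule psd_eig_nonneg[OF \<omega>p Y \<omega>d that])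
  have Uc: "U \<in> carrier_mat m m" using U by simp
  have Yc: "Y \<in> carrier_mat n n" using Y by simp
  have HRc: "H_R \<in> carrier_mat m m" using HR by (simp add: hermitian_def)
  have Hc: "H \<in> carrier_mat n n" using HA by (simp add: hermitian_def)
  have \<gamma>c: "gibbs n \<beta> H \<in> carrier_mat n n" by (rule gibbs_carrier[OF V Hd])
  define \<rho> where "\<rho> = kron R \<omega>"
  have \<rho>c: "\<rho> \<in> carrier_mat (m*n) (m*n)" unfolding \<rho>_def by (rule kron_carrier[OF Rc \<omega>c])
  have \<rho>e: "id_tensor m m n (replacer \<omega>) \<psi> = \<rho>" unfolding \<rho>_def R_def by (rule id_tensor_replacer[OF \<omega>c])
  have s1: "id_tensor m m n (replacer (1\<^sub>m n)) \<psi> = kron R (1\<^sub>m n)"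
    unfolding R_def by (rule id_tensor_replacer[OF one_carrier_mat])
  have sT: "id_tensor m m n (replacer (gibbs n \<beta> H)) \<psi> = kron R (gibbs n \<beta> H)"
    unfolding R_def by (rule id_tensor_replacer[OF \<gamma>c])
  define lR where "lR = mat_fun m lnp R"
  define iR where "iR = mat_fun m ind R"
  define l\<omega> where "l\<omega> = mat_fun n lnp \<omega>"
  define i\<omega> where "i\<omega> = mat_fun n ind \<omega>"
  have lRc: "lR \<in> carrier_mat m m" unfolding lR_def mat_fun_eq[OF U Rd] by (rule udu_carrier[OF Uc])
  have iRc: "iR \<in> carrier_mat m m" unfolding iR_def mat_fun_eq[OF U Rd] by (rule udu_carrier[OF Uc])
  have l\<omega>c: "l\<omega> \<in> carrier_mat n n" unfolding l\<omega>_def mat_fun_eq[OF Y \<omega>d] by (rule udu_carrier[OF Yc])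
  have i\<omega>c: "i\<omega> \<in> carrier_mat n n" unfolding i\<omega>_def mat_fun_eq[OF Y \<omega>d] by (rule udu_carrier[OF Yc])
  have L: "mat_fun (m*n) lnp \<rho> = kron lR i\<omega> + kron iR l\<omega>"
    unfolding \<rho>_def lR_def iR_def l\<omega>_def i\<omega>_def
    using lnp_kron[OF U Y, where da = p and db = w] Rd \<omega>d w by simp
  have M1: "mat_fun (m*n) lnp (kron R (1\<^sub>m n)) = kron lR (1\<^sub>m n) + kron iR (0\<^sub>m n n)"
    unfolding lR_def iR_def by (rule M1_formula[OF U Rd])
  have MT: "mat_fun (m*n) lnp (kron R (gibbs n \<beta> H)) = kron lR (1\<^sub>m n) + kron iR (complex_of_real (- \<beta>) \<cdot>\<^sub>m H)"
    unfolding lR_def iR_def by (rule MT_formula[OF U Rd V Hd])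
  have S1: "\<forall>v \<in> carrier_vec (m*n). kron R (1\<^sub>m n) *\<^sub>v v = 0\<^sub>v (m*n) \<longrightarrow> \<rho> *\<^sub>v v = 0\<^sub>v (m*n)"
  proof (intro ballI impI)
    fix v :: "complex vec" assume v: "v \<in> carrier_vec (m*n)" and z: "kron R (1\<^sub>m n) *\<^sub>v v = 0\<^sub>v (m*n)"
    have "kron (1\<^sub>m m) \<omega> * kron R (1\<^sub>m n) = kron (1\<^sub>m m * R) (\<omega> * 1\<^sub>m n)"
      by (rule kron_mult[OF one_carrier_mat \<omega>c Rc one_carrier_mat])
    also have "\<dots> = \<rho>" unfolding \<rho>_def using Rc \<omega>c by simp
    finally have eq: "\<rho> = kron (1\<^sub>m m) \<omega> * kron R (1\<^sub>m n)" by simp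
    have "\<rho> *\<^sub>v v = kron (1\<^sub>m m) \<omega> *\<^sub>v (kron R (1\<^sub>m n) *\<^sub>v v)"
      unfolding eq by (rule assoc_mult_mat_vec[OF kron_carrier[OF one_carrier_mat \<omega>c] kron_carrier[OF Rc one_carrier_mat] v])
    also have "\<dots> = 0\<^sub>v (m*n)" unfolding z by (rule mult_zero_vec[OF kron_carrier[OF one_carrier_mat \<omega>c]])
    finally show "\<rho> *\<^sub>v v = 0\<^sub>v (m*n)" .
  qed
  have ST: "\<forall>v \<in> carrier_vec (m*n). kron R (gibbs n \<beta> H) *\<^sub>v v = 0\<^sub>v (m*n) \<longrightarrow> \<rho> *\<^sub>v v = 0\<^sub>v (m*n)"
    using S1 gibbs_supp[OF V Hd Rc] by blast
  have RiR: "qtr (R * iR) = 1" unfolding iR_def psd_ind_mult[OF Rp U Rd] by (rule trR)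
  have \<omega>i\<omega>: "qtr (\<omega> * i\<omega>) = 1" unfolding i\<omega>_def psd_ind_mult[OF \<omega>p Y \<omega>d] by (rule tr\<omega>)
  have \<omega>1: "qtr (\<omega> * 1\<^sub>m n) = 1" using \<omega>c tr\<omega> by simp
  have \<omega>0: "qtr (\<omega> * 0\<^sub>m n n) = 0" using \<omega>c by (simp add: qtr_zero right_mult_zero_mat[OF \<omega>c])
  have \<omega>H: "qtr (\<omega> * (complex_of_real (- \<beta>) \<cdot>\<^sub>m H)) = complex_of_real (- \<beta>) * qtr (\<omega> * H)"
    by (rule trm_smult[OF \<omega>c Hc])
  hence \<omega>H': "qtr (\<omega> * (- complex_of_real \<beta> \<cdot>\<^sub>m H)) = - (complex_of_real \<beta> * qtr (\<omega> * H))" by simp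
  have K1: "kron lR i\<omega> \<in> carrier_mat (m*n) (m*n)" by (rule kron_carrier[OF lRc i\<omega>c])
  have K2: "kron iR l\<omega> \<in> carrier_mat (m*n) (m*n)" by (rule kron_carrier[OF iRc l\<omega>c])
  have K3: "kron lR (1\<^sub>m n) \<in> carrier_mat (m*n) (m*n)" by (rule kron_carrier[OF lRc one_carrier_mat])
  have K4: "kron iR (0\<^sub>m n n) \<in> carrier_mat (m*n) (m*n)" by (rule kron_carrier[OF iRc zero_carrier_mat])
  have K5: "kron iR (complex_of_real (- \<beta>) \<cdot>\<^sub>m H) \<in> carrier_mat (m*n) (m*n)"
    by (rule kron_carrier[OF iRc smult_carrier_mat[OF Hc]])
  have trL: "qtr (\<rho> * mat_fun (m*n) lnp \<rho>) = qtr (R * lR) + qtr (\<omega> * l\<omega>)"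
    unfolding L trm_add[OF \<rho>c K1 K2] unfolding \<rho>_def
    by (simp add: trm_kron[OF Rc \<omega>c lRc i\<omega>c] trm_kron[OF Rc \<omega>c iRc l\<omega>c] RiR \<omega>i\<omega>)
  have trM1: "qtr (\<rho> * mat_fun (m*n) lnp (kron R (1\<^sub>m n))) = qtr (R * lR)"
    unfolding M1 trm_add[OF \<rho>c K3 K4] unfolding \<rho>_def
    by (simp add: trm_kron[OF Rc \<omega>c lRc one_carrier_mat] trm_kron[OF Rc \<omega>c iRc zero_carrier_mat] \<omega>1 \<omega>0)
  have trMT: "qtr (\<rho> * mat_fun (m*n) lnp (kron R (gibbs n \<beta> H))) = qtr (R * lR) - complex_of_real \<beta> * qtr (\<omega> * H)"
    unfolding MT trm_add[OF \<rho>c K3 K5] unfolding \<rho>_def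
    by (simp add: trm_kron[OF Rc \<omega>c lRc one_carrier_mat] trm_kron[OF Rc \<omega>c iRc smult_carrier_mat[OF Hc]] \<omega>1 \<omega>H \<omega>H' RiR)
  have Lc: "mat_fun (m*n) lnp \<rho> \<in> carrier_mat (m*n) (m*n)" unfolding L by (rule add_carrier_mat[OF K2])
  have M1c: "mat_fun (m*n) lnp (kron R (1\<^sub>m n)) \<in> carrier_mat (m*n) (m*n)" unfolding M1 by (rule add_carrier_mat[OF K4])
  have MTc: "mat_fun (m*n) lnp (kron R (gibbs n \<beta> H)) \<in> carrier_mat (m*n) (m*n)" unfolding MT by (rule add_carrier_mat[OF K5])
  have en\<omega>: "energy H \<omega> = Re (qtr (\<omega> * H))" unfolding energy_def using qtr_comm[OF Hc \<omega>c] by simp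
  have vn: "vn_ent n \<omega> = - Re (qtr (\<omega> * l\<omega>))" unfolding vn_ent_def l\<omega>_def ..
  show "rel_ent (m*n) (id_tensor m m n (replacer \<omega>) \<psi>) (id_tensor m m n (replacer (gibbs n \<beta> H)) \<psi>)
           = ereal (- vn_ent n \<omega> + \<beta> * energy H \<omega>)"
    unfolding \<rho>e sT rel_ent_def using ST
    by (simp add: trm_minus[OF \<rho>c Lc MTc] trL trMT en\<omega> vn)
  show "rel_ent (m*n) (id_tensor m m n (replacer \<omega>) \<psi>) (id_tensor m m n (replacer (1\<^sub>m n)) \<psi>)
           = ereal (- vn_ent n \<omega>)"
    unfolding \<rho>e s1 rel_ent_def using S1
    by (simp add: trm_minus[OF \<rho>c Lc M1c] trL trM1 vn)
  have "ptr2 m n \<rho> = R" unfolding \<rho>_def ptr2_kron[OF Rc \<omega>c] tr\<omega>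
    by (rule eq_matI) (simp_all add: carrier_matD[OF Rc])
  moreover have "qtr (\<rho> * kron (1\<^sub>m m) H) = qtr (\<omega> * H)"
    unfolding \<rho>_def trm_kron[OF Rc \<omega>c one_carrier_mat Hc] using Rc trR by simp
  ultimately show "energy (kron H_R (1\<^sub>m n) + kron (1\<^sub>m m) H) (id_tensor m m n (replacer \<omega>) \<psi>) - energy H_R (ptr2 m m \<psi>)
           = energy H \<omega>"
    unfolding \<rho>e R_def[symmetric] using energy_split[OF \<rho>c HRc Hc] en\<omega> by simp
qed


lemma ereal_final:
  fixes a b :: ereal and \<beta> :: real
  assumes \<beta>: "0 < \<beta>" and a: "a \<noteq> -\<infinity>" and b: "b \<noteq> -\<infinity>"
  shows "ereal (1/\<beta>) * (a + ereal \<beta> * b) = b - ereal (1/\<beta>) * (- a)"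
proof (cases a)
  case (real x)
  show ?thesis
  proof (cases b)
    case (real y)
    thus ?thesis using \<open>a = ereal x\<close> \<beta> by (simp add: field_simps)
  next
    case PInf
    thus ?thesis using \<open>a = ereal x\<close> \<beta> by simp
  next
    case MInf
    thus ?thesis using b by simp
  qed
next
  case PInf
  show ?thesis
  proof (cases b)
    case (real y)
    thus ?thesis using \<open>a = \<infinity>\<close> \<beta> by simp
  next
    case PInf
    thus ?thesis using \<open>a = \<infinity>\<close> \<beta> by simp
  next
    case MInf
    thus ?thesis using b by simp
  qed
next
  case MInf
  thus ?thesis using a by simp
qed

lemma rel_ent_not_minf: "rel_ent n \<rho> \<sigma> \<noteq> -\<infinity>"
  by (simp add: rel_ent_def)

theorem theorem4:
  fixes m n :: nat and \<beta> :: real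
    and H_A H_R H_RA :: "complex mat"
    and N :: "complex mat \<Rightarrow> complex mat"
  assumes "0 < m" and "0 < n" and "0 < \<beta>"
    and "hermitian n H_A" and "hermitian m H_R"
    and "H_RA = kron H_R (1\<^sub>m n) + kron (1\<^sub>m m) H_A"
    and "channel m n N"
  shows "free_energy_T m n \<beta> H_A N
           \<le> chan_energy m n H_RA H_R N - ereal (1/\<beta>) * chan_ent m n N
      \<and> (\<forall>\<omega>. density n \<omega> \<longrightarrow>
           free_energy_T m n \<beta> H_A (replacer \<omega>)
             = chan_energy m n H_RA H_R (replacer \<omega>) - ereal (1/\<beta>) * chan_ent m n (replacer \<omega>)
         \<and> free_energy_T m n \<beta> H_A (replacer \<omega>)
             = ereal (energy H_A \<omega> - (1/\<beta>) * vn_ent n \<omega>))"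
proof -
  note m = assms(1) and n = assms(2) and \<beta> = assms(3) and HA = assms(4) and HR = assms(5)
    and HRA = assms(6) and N = assms(7)
  define S where "S = {\<psi>. density (m*m) \<psi>}"
  obtain \<psi>0 where \<psi>0: "density (m*m) \<psi>0" using density_exists[of "m*m"] m by auto
  have \<psi>0S: "\<psi>0 \<in> S" unfolding S_def using \<psi>0 by simp
  have Sne: "S \<noteq> {}" using \<psi>0S by blast
  define DT where "DT M \<psi> = rel_ent (m*n) (id_tensor m m n M \<psi>) (id_tensor m m n (replacer (gibbs n \<beta> H_A)) \<psi>)" for M \<psi>
  define D1 where "D1 M \<psi> = rel_ent (m*n) (id_tensor m m n M \<psi>) (id_tensor m m n (replacer (1\<^sub>m n)) \<psi>)" for M \<psi>
  define EN where "EN M \<psi> = energy H_RA (id_tensor m m n M \<psi>) - energy H_R (ptr2 m m \<psi>)" for M \<psi>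
  have F: "free_energy_T m n \<beta> H_A M = ereal (1/\<beta>) * (SUP \<psi>\<in>S. DT M \<psi>)" for M
    unfolding free_energy_T_def chan_div_def S_def DT_def ..
  have CE: "chan_energy m n H_RA H_R M = (SUP \<psi>\<in>S. ereal (EN M \<psi>))" for M
    unfolding chan_energy_def S_def EN_def ..
  have CH: "chan_ent m n M = - (SUP \<psi>\<in>S. D1 M \<psi>)" for M
    unfolding chan_ent_def chan_div_def S_def D1_def ..
  have part1: "free_energy_T m n \<beta> H_A N \<le> chan_energy m n H_RA H_R N - ereal (1/\<beta>) * chan_ent m n N"
  proof -
    define a where "a = (SUP \<psi>\<in>S. D1 N \<psi>)"
    define b where "b = (SUP \<psi>\<in>S. ereal (EN N \<psi>))"
    have le: "DT N \<psi> \<le> D1 N \<psi> + ereal \<beta> * ereal (EN N \<psi>)" if "\<psi> \<in> S" for \<psi>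
      using per_psi[OF m n \<beta> HA HR N, of \<psi>] that unfolding S_def DT_def D1_def EN_def HRA by simp
    have "(SUP \<psi>\<in>S. DT N \<psi>) \<le> a + ereal \<beta> * b"
    proof (rule SUP_least)
      fix \<psi> assume \<psi>: "\<psi> \<in> S"
      have "D1 N \<psi> \<le> a" unfolding a_def using \<psi> by (rule SUP_upper)
      moreover have "ereal (EN N \<psi>) \<le> b" unfolding b_def using \<psi> by (rule SUP_upper)
      hence "ereal \<beta> * ereal (EN N \<psi>) \<le> ereal \<beta> * b" using \<beta> by (intro ereal_mult_left_mono) simp_all
      ultimately have "D1 N \<psi> + ereal \<beta> * ereal (EN N \<psi>) \<le> a + ereal \<beta> * b" by (rule add_mono)
      thus "DT N \<psi> \<le> a + ereal \<beta> * b" using le[OF \<psi>] by (rule order_trans[rotated])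
    qed
    hence "ereal (1/\<beta>) * (SUP \<psi>\<in>S. DT N \<psi>) \<le> ereal (1/\<beta>) * (a + ereal \<beta> * b)"
      using \<beta> by (intro ereal_mult_left_mono) simp_all
    also have "\<dots> = b - ereal (1/\<beta>) * (- a)"
    proof (rule ereal_final[OF \<beta>])
      have "D1 N \<psi>0 \<le> a" unfolding a_def using \<psi>0S by (rule SUP_upper)
      thus "a \<noteq> -\<infinity>" using rel_ent_not_minf[of "m*n"] unfolding D1_def by auto
      have "ereal (EN N \<psi>0) \<le> b" unfolding b_def using \<psi>0S by (rule SUP_upper)
      thus "b \<noteq> -\<infinity>" by auto
    qed
    finally show ?thesis unfolding F CE CH a_def b_def .
  qed
  have part2: "free_energy_T m n \<beta> H_A (replacer \<omega>)
             = chan_energy m n H_RA H_R (replacer \<omega>) - ereal (1/\<beta>) * chan_ent m n (replacer \<omega>)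
         \<and> free_energy_T m n \<beta> H_A (replacer \<omega>)
             = ereal (energy H_A \<omega> - (1/\<beta>) * vn_ent n \<omega>)" if \<omega>: "density n \<omega>" for \<omega>
  proof -
    note po = per_psi_omega[OF m n \<beta> HA HR \<omega>]
    have "(SUP \<psi>\<in>S. DT (replacer \<omega>) \<psi>) = (SUP \<psi>\<in>S. ereal (- vn_ent n \<omega> + \<beta> * energy H_A \<omega>))"
      by (rule SUP_cong[OF refl]) (simp add: DT_def S_def po(1))
    also have "\<dots> = ereal (- vn_ent n \<omega> + \<beta> * energy H_A \<omega>)" by (rule SUP_const[OF Sne])
    finally have e1: "(SUP \<psi>\<in>S. DT (replacer \<omega>) \<psi>) = ereal (- vn_ent n \<omega> + \<beta> * energy H_A \<omega>)" .
    have "(SUP \<psi>\<in>S. D1 (replacer \<omega>) \<psi>) = (SUP \<psi>\<in>S. ereal (- vn_ent n \<omega>))"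
      by (rule SUP_cong[OF refl]) (simp add: D1_def S_def po(2))
    also have "\<dots> = ereal (- vn_ent n \<omega>)" by (rule SUP_const[OF Sne])
    finally have e2: "(SUP \<psi>\<in>S. D1 (replacer \<omega>) \<psi>) = ereal (- vn_ent n \<omega>)" .
    have "(SUP \<psi>\<in>S. ereal (EN (replacer \<omega>) \<psi>)) = (SUP \<psi>\<in>S. ereal (energy H_A \<omega>))"
      by (rule SUP_cong[OF refl]) (simp add: EN_def S_def po(3) HRA)
    also have "\<dots> = ereal (energy H_A \<omega>)" by (rule SUP_const[OF Sne])
    finally have e3: "(SUP \<psi>\<in>S. ereal (EN (replacer \<omega>) \<psi>)) = ereal (energy H_A \<omega>)" .
    have r1: "free_energy_T m n \<beta> H_A (replacer \<omega>) = ereal (energy H_A \<omega> - (1/\<beta>) * vn_ent n \<omega>)"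
      unfolding F e1 using \<beta> by (simp add: field_simps)
    have r2: "chan_energy m n H_RA H_R (replacer \<omega>) - ereal (1/\<beta>) * chan_ent m n (replacer \<omega>)
        = ereal (energy H_A \<omega> - (1/\<beta>) * vn_ent n \<omega>)"
      unfolding CE CH e2 e3 by simp
    show ?thesis using r1 r2 by simp
  qed
  show ?thesis using part1 part2 by blast
qed


end
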